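(* Let $m\ge2$, $w$ an infinite periodic or Sturmian word over $\{0,1\}$ with slope $\alpha$, $\beta=\frac1{m+\alpha}$, and $A=A(m,w)$ with the $\mathbb{Z}_2$-grading in which $z_1^{(1)},a$ are even and $b$ is odd. For every $0<\varepsilon\le\frac12-\beta$ there exists $n_0$ such that $c_n^{gr}(A)\le 2n^3\Phi(\beta+\varepsilon)^n$ for all $n\ge n_0$. In particular $\overline{\exp}^{gr}(A)\le\Phi(\beta)$.
   Context: $F$ is a field of characteristic zero. $A(m,w)$: basis $\{a,b,z_j^{(i)}: i\ge1,1\le j\le m+w_i\}$, products $z_j^{(i)}a=z_{j+1}^{(i)}$ for $j<m+w_i$, $z_{m+w_i}^{(i)}b=z_1^{(i+1)}$, all other products zero. Grading: $A_0=\mathrm{span}\{a,z_j^{(i)}:i\text{ odd}\}$, $A_1=\mathrm{span}\{b,z_j^{(i)}:i\text{ even}\}$. Slope $\pi(w)=\lim_n(w_1+\dots+w_n)/n$. $\Phi(x)=x^{-x}(1-x)^{-(1-x)}$. $c_n^{gr}(A)=\sum_{k=0}^n\binom nk c_{k,n-k}(A)$, with $c_{k,n-k}(A)$ the dimension of the space of polynomials multilinear in even $x_1..x_k$ and odd $y_1..y_{n-k}$ modulo graded identities of $A$; $\overline{\exp}^{gr}(A)=\limsup\sqrt[n]{c_n^{gr}(A)}$. *)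

theory Defs
  imports "HOL-Analysis.Analysis"
begin

text \<open>An infinite word w = w_1 w_2 ... over {0,1} is modelled as a function
  w :: nat \<Rightarrow> nat with w i \<in> {0,1} for i \<ge> 1 (the value at 0 is irrelevant).\<close>

definition binary_word :: "(nat \<Rightarrow> nat) \<Rightarrow> bool" where
  "binary_word w \<longleftrightarrow> (\<forall>i\<ge>1. w i \<in> {0,1})"

definition periodic_word :: "(nat \<Rightarrow> nat) \<Rightarrow> bool" where
  "periodic_word w \<longleftrightarrow> (\<exists>p\<ge>1. \<forall>i\<ge>1. w (i + p) = w i)"

definition factors :: "(nat \<Rightarrow> nat) \<Rightarrow> nat \<Rightarrow> nat list set" where
  "factors w n = {map (\<lambda>j. w (i + j)) [0..<n] | i. i \<ge> 1}"

definition sturmian_word :: "(nat \<Rightarrow> nat) \<Rightarrow> bool" where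
  "sturmian_word w \<longleftrightarrow> (\<forall>n. finite (factors w n) \<and> card (factors w n) = n + 1)"

definition has_slope :: "(nat \<Rightarrow> nat) \<Rightarrow> real \<Rightarrow> bool" where
  "has_slope w \<alpha> \<longleftrightarrow> (\<lambda>n. (\<Sum>i=1..n. real (w i)) / real n) \<longlonglongrightarrow> \<alpha>"

datatype bidx = Ba | Bb | Bz nat nat   (* Bz i j = z_j^(i) *)

definition valid_idx :: "nat \<Rightarrow> (nat \<Rightarrow> nat) \<Rightarrow> bidx \<Rightarrow> bool" where
  "valid_idx m w b = (case b of Ba \<Rightarrow> True | Bb \<Rightarrow> True
      | Bz i j \<Rightarrow> 1 \<le> i \<and> 1 \<le> j \<and> j \<le> m + w i)"

text \<open>Product of basis elements: Some e if the product is the basis element e, None if zero.\<close>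
fun bprod :: "nat \<Rightarrow> (nat \<Rightarrow> nat) \<Rightarrow> bidx \<Rightarrow> bidx \<Rightarrow> bidx option" where
  "bprod m w (Bz i j) Ba = (if j < m + w i then Some (Bz i (j + 1)) else None)"
| "bprod m w (Bz i j) Bb = (if j = m + w i then Some (Bz (i + 1) 1) else None)"
| "bprod m w _ _ = None"

fun even_idx :: "bidx \<Rightarrow> bool" where
  "even_idx Ba = True"
| "even_idx Bb = False"
| "even_idx (Bz i j) = odd i"

definition A_elem :: "nat \<Rightarrow> (nat \<Rightarrow> nat) \<Rightarrow> (bidx \<Rightarrow> 'a::field) \<Rightarrow> bool" where
  "A_elem m w u \<longleftrightarrow> finite {b. u b \<noteq> 0} \<and> (\<forall>b. u b \<noteq> 0 \<longrightarrow> valid_idx m w b)"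

definition A_even :: "nat \<Rightarrow> (nat \<Rightarrow> nat) \<Rightarrow> (bidx \<Rightarrow> 'a::field) \<Rightarrow> bool" where
  "A_even m w u \<longleftrightarrow> A_elem m w u \<and> (\<forall>b. u b \<noteq> 0 \<longrightarrow> even_idx b)"

definition A_odd :: "nat \<Rightarrow> (nat \<Rightarrow> nat) \<Rightarrow> (bidx \<Rightarrow> 'a::field) \<Rightarrow> bool" where
  "A_odd m w u \<longleftrightarrow> A_elem m w u \<and> (\<forall>b. u b \<noteq> 0 \<longrightarrow> \<not> even_idx b)"

definition A_mult :: "nat \<Rightarrow> (nat \<Rightarrow> nat) \<Rightarrow> (bidx \<Rightarrow> 'a::field) \<Rightarrow> (bidx \<Rightarrow> 'a) \<Rightarrow> bidx \<Rightarrow> 'a" where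
  "A_mult m w u v e = (\<Sum>b1\<in>{b. u b \<noteq> 0}. \<Sum>b2\<in>{b. v b \<noteq> 0}.
      (if bprod m w b1 b2 = Some e then u b1 * v b2 else 0))"

text \<open>In degree n the
  variables are 0..n-1; for the space P_{k,n-k}, variables v < k stand for the even
  variables x_1..x_k and variables k \<le> v < n for the odd variables y_1..y_{n-k}.\<close>
datatype mon = Var nat | Mul mon mon

fun leaves :: "mon \<Rightarrow> nat list" where
  "leaves (Var v) = [v]"
| "leaves (Mul s t) = leaves s @ leaves t"

definition multilin_mons :: "nat \<Rightarrow> mon set" where
  "multilin_mons n = {t. distinct (leaves t) \<and> set (leaves t) = {..<n}}"

definition multilin_polys :: "nat \<Rightarrow> (mon \<Rightarrow> 'a::field) set" where
  "multilin_polys n = {p. \<forall>t. p t \<noteq> 0 \<longrightarrow> t \<in> multilin_mons n}"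

fun eval_mon :: "nat \<Rightarrow> (nat \<Rightarrow> nat) \<Rightarrow> mon \<Rightarrow> (nat \<Rightarrow> bidx \<Rightarrow> 'a::field) \<Rightarrow> bidx \<Rightarrow> 'a" where
  "eval_mon m w (Var v) s = s v"
| "eval_mon m w (Mul t1 t2) s = A_mult m w (eval_mon m w t1 s) (eval_mon m w t2 s)"

definition eval_poly :: "nat \<Rightarrow> (nat \<Rightarrow> nat) \<Rightarrow> nat \<Rightarrow> (mon \<Rightarrow> 'a::field) \<Rightarrow> (nat \<Rightarrow> bidx \<Rightarrow> 'a) \<Rightarrow> bidx \<Rightarrow> 'a" where
  "eval_poly m w n p s e = (\<Sum>t\<in>multilin_mons n. p t * eval_mon m w t s e)"

definition graded_subst :: "nat \<Rightarrow> (nat \<Rightarrow> nat) \<Rightarrow> nat \<Rightarrow> nat \<Rightarrow> (nat \<Rightarrow> bidx \<Rightarrow> 'a::field) \<Rightarrow> bool" where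
  "graded_subst m w k n s \<longleftrightarrow> (\<forall>v<n. (v < k \<longrightarrow> A_even m w (s v)) \<and> (k \<le> v \<longrightarrow> A_odd m w (s v)))"

definition graded_identity :: "nat \<Rightarrow> (nat \<Rightarrow> nat) \<Rightarrow> nat \<Rightarrow> nat \<Rightarrow> (mon \<Rightarrow> 'a::field) \<Rightarrow> bool" where
  "graded_identity m w k n p \<longleftrightarrow>
     (\<forall>s. graded_subst m w k n s \<longrightarrow> (\<forall>e. eval_poly m w n p s e = 0))"

text \<open>c_{k,n-k}(A) = dim P_{k,n-k} / (P_{k,n-k} \<inter> Id^gr(A)), i.e. the maximal number of
  elements of P_{k,n-k} that are linearly independent modulo the graded identities.\<close>
definition cgr_kl :: "'a::field itself \<Rightarrow> nat \<Rightarrow> (nat \<Rightarrow> nat) \<Rightarrow> nat \<Rightarrow> nat \<Rightarrow> nat" where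
  "cgr_kl (F :: 'a itself) m w k n = Max {r. \<exists>f :: nat \<Rightarrow> mon \<Rightarrow> 'a.
      (\<forall>i<r. f i \<in> multilin_polys n) \<and>
      (\<forall>c :: nat \<Rightarrow> 'a. graded_identity m w k n (\<lambda>t. \<Sum>i<r. c i * f i t) \<longrightarrow> (\<forall>i<r. c i = 0))}"

definition cgr :: "'a::field itself \<Rightarrow> nat \<Rightarrow> (nat \<Rightarrow> nat) \<Rightarrow> nat \<Rightarrow> nat" where
  "cgr F m w n = (\<Sum>k=0..n. (n choose k) * cgr_kl F m w k n)"

definition Phi :: "real \<Rightarrow> real" where
  "Phi x = x powr (- x) * (1 - x) powr (- (1 - x))"

end

theory Submission
  imports Defs "HOL-Library.Function_Algebras"
begin


definition fac :: "(nat \<Rightarrow> nat) \<Rightarrow> nat \<Rightarrow> nat \<Rightarrow> nat list" where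
  "fac w i k = map (\<lambda>j. w (i + j)) [0..<k]"

lemma factors_eq: "factors w k = (\<lambda>i. fac w i k) ` {1..}"
  unfolding factors_def fac_def by auto

lemma fac_in: "i \<ge> 1 \<Longrightarrow> fac w i k \<in> factors w k"
  unfolding factors_eq by auto

lemma length_fac[simp]: "length (fac w i k) = k"
  by (simp add: fac_def)

lemma fac_Suc_right: "fac w i (Suc k) = fac w i k @ [w (i + k)]"
  by (simp add: fac_def)

lemma fac_Suc_left: "fac w i (Suc k) = w i # fac w (Suc i) k"
  unfolding fac_def by (induct k) auto

lemma fac_nth: "j < k \<Longrightarrow> fac w i k ! j = w (i + j)"
  by (simp add: fac_def)

lemma fac_eq_iff: "fac w i k = fac w i' k \<longleftrightarrow> (\<forall>j<k. w (i + j) = w (i' + j))"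
  by (auto simp: fac_def)

lemma fac_step: "fac w (Suc i) k = tl (fac w i k) @ (if k = 0 then [] else [w (i + k)])"
  unfolding fac_def by (induct k) (auto simp: upt_conv_Cons map_Suc_upt[symmetric] o_def)

lemma factors_binary:
  assumes "binary_word w"
  shows "factors w k \<subseteq> {xs. set xs \<subseteq> {0,1} \<and> length xs = k}"
proof
  fix xs assume "xs \<in> factors w k"
  then obtain i where i: "i \<ge> 1" "xs = fac w i k" unfolding factors_eq by auto
  have "\<forall>j. w (i + j) \<in> {0,1}" using assms i unfolding binary_word_def by auto
  then show "xs \<in> {xs. set xs \<subseteq> {0,1} \<and> length xs = k}" using i unfolding fac_def
    by (simp only: mem_Collect_eq set_map length_map length_upt diff_zero image_subset_iff) blast
qed

lemma length_factors: "u \<in> factors w k \<Longrightarrow> length u = k"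
  unfolding factors_eq by auto

lemma finite_factors:
  assumes "binary_word w"
  shows "finite (factors w k)"
proof -
  have "finite {xs. set xs \<subseteq> {0::nat,1} \<and> length xs = k}"
    by (rule finite_lists_length_eq) simp
  then show ?thesis using factors_binary[OF assms] finite_subset by blast
qed

lemma factors_0: "factors w 0 = {[]}"
  unfolding factors_eq fac_def by auto

definition rs :: "(nat \<Rightarrow> nat) \<Rightarrow> nat list \<Rightarrow> bool" where
  "rs w u \<longleftrightarrow> u @ [0] \<in> factors w (Suc (length u)) \<and> u @ [1] \<in> factors w (Suc (length u))"

lemma prefix_factor:
  assumes "u @ [c] \<in> factors w (Suc k)"
  shows "u \<in> factors w k"
proof -
  from assms obtain i where i: "i \<ge> 1" "fac w i (Suc k) = u @ [c]"
    unfolding factors_eq by auto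
  then have "fac w i k = u" by (simp add: fac_Suc_right)
  then show ?thesis using i fac_in by blast
qed

lemma card_factors_Suc:
  assumes "binary_word w"
  shows "card (factors w (Suc k)) = card (factors w k) + card {u \<in> factors w k. rs w u}"
proof -
  define F where "F = factors w k"
  define F' where "F' = factors w (Suc k)"
  define A where "A = {u \<in> F. u @ [0] \<in> F'}"
  define B where "B = {u \<in> F. u @ [1] \<in> F'}"
  have finF: "finite F" unfolding F_def using finite_factors[OF assms] .
  have AB: "A \<union> B = F"
  proof
    show "A \<union> B \<subseteq> F" unfolding A_def B_def by auto
    show "F \<subseteq> A \<union> B"
    proof
      fix u assume "u \<in> F"
      then obtain i where i: "i \<ge> 1" "u = fac w i k" unfolding F_def factors_eq by auto
      have "w (i + k) \<in> {0,1}" using assms i unfolding binary_word_def by auto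
      moreover have "u @ [w (i+k)] \<in> F'" unfolding F'_def using i fac_in fac_Suc_right by metis
      ultimately show "u \<in> A \<union> B" unfolding A_def B_def using \<open>u \<in> F\<close> by auto
    qed
  qed
  have F'eq: "F' = (\<lambda>u. u @ [0]) ` A \<union> (\<lambda>u. u @ [1]) ` B"
  proof
    show "F' \<subseteq> (\<lambda>u. u @ [0]) ` A \<union> (\<lambda>u. u @ [1]) ` B"
    proof
      fix v assume v: "v \<in> F'"
      then obtain i where i: "i \<ge> 1" "v = fac w i (Suc k)" unfolding F'_def factors_eq by auto
      have "w (i + k) \<in> {0,1}" using assms i unfolding binary_word_def by auto
      moreover have "v = fac w i k @ [w (i+k)]" using i fac_Suc_right by metis
      moreover have "fac w i k \<in> F" unfolding F_def using i fac_in by blast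
      ultimately show "v \<in> (\<lambda>u. u @ [0]) ` A \<union> (\<lambda>u. u @ [1]) ` B"
        unfolding A_def B_def using v by auto
    qed
    show "(\<lambda>u. u @ [0]) ` A \<union> (\<lambda>u. u @ [1]) ` B \<subseteq> F'"
      unfolding A_def B_def by auto
  qed
  have finA: "finite A" "finite B" using finF unfolding A_def B_def by auto
  have "card F' = card ((\<lambda>u. u @ [0]) ` A) + card ((\<lambda>u. u @ [1]) ` B)"
    unfolding F'eq by (rule card_Un_disjoint) (use finA in auto)
  also have "\<dots> = card A + card B"
    by (subst card_image, simp add: inj_on_def)+ simp
  also have "\<dots> = card (A \<union> B) + card (A \<inter> B)"
    using card_Un_Int[OF finA] by simp
  also have "A \<inter> B = {u \<in> F. rs w u}"
  proof
    show "A \<inter> B \<subseteq> {u \<in> F. rs w u}"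
      unfolding A_def B_def rs_def F_def F'_def using length_factors by auto
    show "{u \<in> F. rs w u} \<subseteq> A \<inter> B"
      unfolding A_def B_def rs_def F_def F'_def using length_factors by auto
  qed
  finally show ?thesis using AB unfolding F_def F'_def by simp
qed

lemma card_factors_mono_Suc:
  assumes "binary_word w"
  shows "card (factors w k) \<le> card (factors w (Suc k))"
  using card_factors_Suc[OF assms] by simp

definition eventually_periodic :: "(nat \<Rightarrow> nat) \<Rightarrow> bool" where
  "eventually_periodic w \<longleftrightarrow> (\<exists>T P. T \<ge> 1 \<and> P \<ge> 1 \<and> (\<forall>t\<ge>T. w (t + P) = w t))"

lemma ep_card_bound:
  assumes "T \<ge> 1" "P \<ge> 1" "\<forall>t\<ge>T. w (t + P) = w t"
  shows "factors w k \<subseteq> (\<lambda>i. fac w i k) ` {1..<T+P}"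
proof
  fix u assume "u \<in> factors w k"
  then obtain i where i: "i \<ge> 1" "u = fac w i k" unfolding factors_eq by auto
  show "u \<in> (\<lambda>i. fac w i k) ` {1..<T+P}"
  proof (cases "i < T + P")
    case True then show ?thesis using i by auto
  next
    case False
    define i' where "i' = T + (i - T) mod P"
    have per: "\<And>q r. w (T + r + q * P) = w (T + r)"
    proof -
      fix q r show "w (T + r + q * P) = w (T + r)"
      proof (induct q)
        case (Suc q)
        have "w (T + r + Suc q * P) = w ((T + r + q * P) + P)" by (simp add: algebra_simps)
        also have "\<dots> = w (T + r + q * P)" using assms(3) by simp
        finally show ?case using Suc by simp
      qed simp
    qed
    have "i = T + (i - T) mod P + ((i - T) div P) * P" using False by simp
    then have "\<forall>j. w (i + j) = w (i' + j)"
      unfolding i'_def by (metis per add.commute add.left_commute)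
    then have "u = fac w i' k" unfolding i fac_def by simp
    moreover have "i' \<in> {1..<T+P}" unfolding i'_def using assms by auto
    ultimately show ?thesis by auto
  qed
qed

lemma ep_card_le:
  assumes "eventually_periodic w"
  shows "\<exists>C. \<forall>k. card (factors w k) \<le> C"
proof -
  from assms obtain T P where TP: "T \<ge> 1" "P \<ge> 1" "\<forall>t\<ge>T. w (t + P) = w t"
    unfolding eventually_periodic_def by auto
  have "card (factors w k) \<le> T + P" for k
  proof -
    have "card (factors w k) \<le> card ((\<lambda>i. fac w i k) ` {1..<T+P})"
      by (rule card_mono) (use ep_card_bound[OF TP] in auto)
    also have "\<dots> \<le> card {1..<T+P}" by (rule card_image_le) simp
    finally show ?thesis by simp
  qed
  then show ?thesis by blast
qed

lemma sturmian_not_ep: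
  assumes "sturmian_word w"
  shows "\<not> eventually_periodic w"
proof
  assume "eventually_periodic w"
  then obtain C where "\<forall>k. card (factors w k) \<le> C" using ep_card_le by blast
  then have "card (factors w C) \<le> C" by blast
  moreover have "card (factors w C) = C + 1" using assms unfolding sturmian_word_def by blast
  ultimately show False by simp
qed

lemma det_ep:
  assumes bin: "binary_word w" and i1: "i \<ge> 1"
    and det: "\<forall>t t'. t \<ge> i \<longrightarrow> t' \<ge> i \<longrightarrow> fac w t j = fac w t' j \<longrightarrow> w (t + j) = w (t' + j)"
  shows "eventually_periodic w"
proof -
  define N where "N = card (factors w j)"
  have "\<not> inj_on (\<lambda>t. fac w t j) {i..i+N}"
  proof
    assume inj: "inj_on (\<lambda>t. fac w t j) {i..i+N}"
    have "card {i..i+N} \<le> card (factors w j)"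
      by (rule card_inj_on_le[OF inj]) (use i1 fac_in finite_factors[OF bin] in auto)
    then show False unfolding N_def by simp
  qed
  then obtain t1 t2 where t12: "t1 \<in> {i..i+N}" "t2 \<in> {i..i+N}" "t1 < t2" "fac w t1 j = fac w t2 j"
    unfolding inj_on_def by (metis linorder_neqE_nat)
  have key: "fac w (t1 + s) j = fac w (t2 + s) j" for s
  proof (induct s)
    case 0 then show ?case using t12 by simp
  next
    case (Suc s)
    have "w (t1 + s + j) = w (t2 + s + j)" using det Suc t12 by auto
    then show ?case using Suc fac_step[of w "t1 + s" j] fac_step[of w "t2 + s" j] by simp
  qed
  have "\<forall>t\<ge>t1 + j. w (t + (t2 - t1)) = w t"
  proof (intro allI impI)
    fix t assume "t \<ge> t1 + j"
    then obtain s where s: "t = t1 + s + j" by (metis add.commute le_add_diff_inverse add.assoc)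
    have "w (t1 + s + j) = w (t2 + s + j)" using det key t12 by auto
    then show "w (t + (t2 - t1)) = w t" using s t12 by (simp add: ac_simps)
  qed
  then show ?thesis unfolding eventually_periodic_def using t12 i1
    by (intro exI[of _ "t1 + j"] exI[of _ "t2 - t1"]) auto
qed

lemma no_rs_ep:
  assumes bin: "binary_word w" and "\<forall>u\<in>factors w j. \<not> rs w u"
  shows "eventually_periodic w"
proof (rule det_ep[OF bin, of 1 j])
  show "\<forall>t t'. t \<ge> 1 \<longrightarrow> t' \<ge> 1 \<longrightarrow> fac w t j = fac w t' j \<longrightarrow> w (t + j) = w (t' + j)"
  proof (intro allI impI)
    fix t t' assume tt: "t \<ge> 1" "t' \<ge> 1" "fac w t j = fac w t' j"
    show "w (t + j) = w (t' + j)"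
    proof (rule ccontr)
      assume ne: "w (t + j) \<noteq> w (t' + j)"
      have b: "w (t+j) \<in> {0,1}" "w (t'+j) \<in> {0,1}" using bin tt unfolding binary_word_def by auto
      have f1: "fac w t j @ [w (t+j)] \<in> factors w (Suc j)" using fac_in tt fac_Suc_right by metis
      have f2: "fac w t j @ [w (t'+j)] \<in> factors w (Suc j)" using fac_in tt fac_Suc_right by metis
      have "rs w (fac w t j)" unfolding rs_def using f1 f2 b ne by auto
      then show False using assms(2) fac_in tt by blast
    qed
  qed
qed simp

lemma morse_hedlund:
  assumes bin: "binary_word w" and le: "card (factors w n) \<le> n"
  shows "eventually_periodic w"
proof -
  have "\<exists>j<n. card (factors w (Suc j)) = card (factors w j)"
  proof (rule ccontr)
    assume "\<not> ?thesis"
    then have "\<forall>j<n. card (factors w j) < card (factors w (Suc j))"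
      using card_factors_mono_Suc[OF bin] le_neq_implies_less by metis
    then have "\<forall>j\<le>n. card (factors w j) \<ge> j + 1"
    proof -
      assume H: "\<forall>j<n. card (factors w j) < card (factors w (Suc j))"
      show ?thesis
      proof (intro allI impI)
        fix j assume "j \<le> n" then show "card (factors w j) \<ge> j + 1"
          by (induct j) (auto simp: factors_0 dest!: spec[of _ "_"] intro: Suc_leI order.strict_trans1
                          elim: order.trans[rotated] simp add: H Suc_le_eq less_imp_le_nat)
      qed
    qed
    then show False using le by (metis le_refl not_less_eq_eq add.commute plus_1_eq_Suc)
  qed
  then obtain j where "card (factors w (Suc j)) = card (factors w j)" by blast
  then have "card {u \<in> factors w j. rs w u} = 0" using card_factors_Suc[OF bin, of j] by simp
  then have "\<forall>u\<in>factors w j. \<not> rs w u" using finite_factors[OF bin, of j] by auto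
  then show ?thesis using no_rs_ep[OF bin] by blast
qed

lemma stu_card: "sturmian_word w \<Longrightarrow> card (factors w k) = k + 1"
  unfolding sturmian_word_def by blast

lemma stu_rs_card:
  assumes "binary_word w" "sturmian_word w"
  shows "card {u \<in> factors w k. rs w u} = 1"
proof -
  have "card (factors w (Suc k)) = card (factors w k) + card {u \<in> factors w k. rs w u}"
    by (rule card_factors_Suc[OF assms(1)])
  moreover have "card (factors w (Suc k)) = Suc k + 1" "card (factors w k) = k + 1"
    using stu_card[OF assms(2)] by blast+
  ultimately show ?thesis by linarith
qed

lemma stu_rs_unique:
  assumes "binary_word w" "sturmian_word w" "u \<in> factors w k" "rs w u" "v \<in> factors w k" "rs w v"
  shows "u = v"
proof -
  have "card {u \<in> factors w k. rs w u} = 1" by (rule stu_rs_card[OF assms(1,2)])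
  then obtain z where z: "{u \<in> factors w k. rs w u} = {z}" using card_1_singletonE by blast
  have "u \<in> {z}" "v \<in> {z}" using assms(3-6) unfolding z[symmetric] by auto
  then show ?thesis by simp
qed

lemma stu_rs_late:
  assumes bin: "binary_word w" and st: "sturmian_word w" and i1: "i \<ge> 1"
  shows "\<exists>t\<ge>i. rs w (fac w t j)"
proof (rule ccontr)
  assume H: "\<not> ?thesis"
  have "eventually_periodic w"
  proof (rule det_ep[OF bin i1, of j], intro allI impI)
    fix t t' assume tt: "t \<ge> i" "t' \<ge> i" "fac w t j = fac w t' j"
    show "w (t + j) = w (t' + j)"
    proof (rule ccontr)
      assume ne: "w (t + j) \<noteq> w (t' + j)"
      have b: "w (t+j) \<in> {0,1}" "w (t'+j) \<in> {0,1}" using bin tt i1 unfolding binary_word_def by auto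
      have t1: "t \<ge> 1" "t' \<ge> 1" using tt i1 by auto
      have f1: "fac w t j @ [w (t+j)] \<in> factors w (Suc j)" using fac_in[OF t1(1), of w "Suc j"] fac_Suc_right by metis
      have f2: "fac w t j @ [w (t'+j)] \<in> factors w (Suc j)" using fac_in[OF t1(2), of w "Suc j"] fac_Suc_right tt(3) by metis
      have "rs w (fac w t j)" unfolding rs_def using f1 f2 b ne by auto
      then show False using H tt by blast
    qed
  qed
  then show False using sturmian_not_ep[OF st] by blast
qed

lemma shift_binary: "binary_word w \<Longrightarrow> binary_word (\<lambda>t. w (t + T))"
  unfolding binary_word_def by auto

lemma stu_recurrent:
  assumes bin: "binary_word w" and st: "sturmian_word w" and i0: "i0 \<ge> 1"
  shows "\<exists>t\<ge>T. fac w t k = fac w i0 k"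
proof (rule ccontr)
  assume H: "\<not> ?thesis"
  define y where "y = (\<lambda>t. w (t + T))"
  define K where "K = i0 + k"
  have sub: "factors y K \<subseteq> factors w K - {fac w 1 K}"
  proof
    fix u assume "u \<in> factors y K"
    then obtain t where t: "t \<ge> 1" "u = fac y t K" unfolding factors_eq by auto
    have u': "u = fac w (t + T) K" unfolding t y_def fac_def by (simp add: ac_simps)
    have "u \<noteq> fac w 1 K"
    proof
      assume "u = fac w 1 K"
      then have eq: "\<forall>j<K. w (1 + j) = w (t + T + j)" using u' fac_eq_iff by metis
      have "fac w (t + T + (i0 - 1)) k = fac w i0 k"
        unfolding fac_eq_iff
      proof (intro allI impI)
        fix j assume "j < k"
        then have "i0 - 1 + j < K" using i0 unfolding K_def by simp
        then have "w (1 + (i0 - 1 + j)) = w (t + T + (i0 - 1 + j))" using eq by blast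
        moreover have "1 + (i0 - 1 + j) = i0 + j" using i0 by simp
        ultimately show "w (t + T + (i0 - 1) + j) = w (i0 + j)" by (simp add: ac_simps)
      qed
      moreover have "t + T + (i0 - 1) \<ge> T" by simp
      ultimately show False using H by blast
    qed
    then show "u \<in> factors w K - {fac w 1 K}" using u' fac_in t by auto
  qed
  have "card (factors y K) \<le> card (factors w K - {fac w 1 K})"
    by (rule card_mono) (use sub finite_factors[OF bin] in auto)
  also have "\<dots> = K" using stu_card[OF st, of K] fac_in[of 1 w K] finite_factors[OF bin] by simp
  finally have "eventually_periodic y" using morse_hedlund[OF shift_binary[OF bin]] unfolding y_def by blast
  then obtain T' P where TP: "T' \<ge> 1" "P \<ge> 1" "\<forall>t\<ge>T'. y (t + P) = y t"
    unfolding eventually_periodic_def by blast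
  have "\<forall>t\<ge>T' + T. w (t + P) = w t"
  proof (intro allI impI)
    fix t assume "t \<ge> T' + T"
    then have "t - T \<ge> T'" by simp
    then have "y (t - T + P) = y (t - T)" using TP by blast
    then show "w (t + P) = w t" unfolding y_def using \<open>t \<ge> T' + T\<close> by simp
  qed
  then have "eventually_periodic w" unfolding eventually_periodic_def using TP by (intro exI[of _ "T' + T"] exI[of _ P]) auto
  then show False using sturmian_not_ep[OF st] by blast
qed


definition Wn :: "(nat \<Rightarrow> nat) \<Rightarrow> nat \<Rightarrow> nat \<Rightarrow> nat" where
  "Wn w i k = (\<Sum>j<k. w (i + j))"

lemma Wn_0[simp]: "Wn w i 0 = 0" by (simp add: Wn_def)

lemma Wn_Suc_right: "Wn w i (Suc k) = Wn w i k + w (i + k)"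
  by (simp add: Wn_def)

lemma Wn_add: "Wn w i (a + b) = Wn w i a + Wn w (i + a) b"
  by (induct b) (simp_all add: Wn_Suc_right ac_simps)

lemma Wn_Suc_left: "Wn w i (Suc k) = w i + Wn w (Suc i) k"
  using Wn_add[of w i 1 k] by (simp add: Wn_def)

lemma Wn_cong: "(\<forall>j<k. w (i + j) = w (i' + j)) \<Longrightarrow> Wn w i k = Wn w i' k"
  unfolding Wn_def by simp

lemma Wn_le: "binary_word w \<Longrightarrow> i \<ge> 1 \<Longrightarrow> Wn w i k \<le> k"
proof (induct k)
  case (Suc k)
  have "i + k \<ge> 1" using Suc.prems by simp
  then have "w (i + k) \<in> {0,1}" using Suc.prems unfolding binary_word_def by blast
  then have "w (i + k) \<le> 1" by auto
  then show ?case using Suc by (simp add: Wn_Suc_right)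
qed simp

definition balanced :: "(nat \<Rightarrow> nat) \<Rightarrow> bool" where
  "balanced w \<longleftrightarrow> (\<forall>k i i'. i \<ge> 1 \<longrightarrow> i' \<ge> 1 \<longrightarrow> Wn w i k \<le> Wn w i' k + 1)"

lemma bin01: "binary_word w \<Longrightarrow> i \<ge> 1 \<Longrightarrow> w i = 0 \<or> w i = 1"
  unfolding binary_word_def by auto

lemma unbal_pair:
  assumes bin: "binary_word w" and nb: "\<not> balanced w"
  shows "\<exists>a b n. a \<ge> 2 \<and> b \<ge> 2 \<and> w (a - 1) = 1 \<and> w (a + n) = 1 \<and> w (b - 1) = 0 \<and> w (b + n) = 0
           \<and> fac w a n = fac w b n"
proof -
  define P where "P k \<longleftrightarrow> (\<exists>i i'. i \<ge> 1 \<and> i' \<ge> 1 \<and> Wn w i k > Wn w i' k + 1)" for k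
  have "\<exists>k. P k" using nb unfolding balanced_def P_def by (auto simp: not_le)
  define k where "k = (LEAST k. P k)"
  have Pk: "P k" unfolding k_def using \<open>\<exists>k. P k\<close> by (rule LeastI_ex)
  have minim: "\<And>k' i i'. k' < k \<Longrightarrow> i \<ge> 1 \<Longrightarrow> i' \<ge> 1 \<Longrightarrow> Wn w i k' \<le> Wn w i' k' + 1"
  proof -
    fix k' i i' :: nat assume "k' < k" "i \<ge> 1" "i' \<ge> 1"
    then have "\<not> P k'" unfolding k_def using not_less_Least by blast
    then show "Wn w i k' \<le> Wn w i' k' + 1" using \<open>i \<ge> 1\<close> \<open>i' \<ge> 1\<close> unfolding P_def
      using not_less by blast
  qed
  obtain i i' where ii: "i \<ge> 1" "i' \<ge> 1" "Wn w i k > Wn w i' k + 1" using Pk unfolding P_def by auto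
  have "k \<ge> 2"
  proof (rule ccontr)
    assume "\<not> k \<ge> 2"
    then have "k = 0 \<or> k = 1" by auto
    then show False
    proof
      assume "k = 0" then show False using ii by simp
    next
      assume "k = 1"
      then show False using ii Wn_le[OF bin ii(1), of 1] by simp
    qed
  qed
  then obtain n where kn: "k = n + 2" by (metis add.commute le_add_diff_inverse)
  have b1: "\<And>t. t \<ge> 1 \<Longrightarrow> w t = 0 \<or> w t = 1" using bin01[OF bin] by blast
  have A1: "Wn w i k = w i + Wn w (i+1) (n+1)" "Wn w i' k = w i' + Wn w (i'+1) (n+1)"
    using Wn_Suc_left[of w i "n+1"] Wn_Suc_left[of w i' "n+1"] kn by simp_all
  have A2: "Wn w (i+1) (n+1) \<le> Wn w (i'+1) (n+1) + 1" using minim[of "n+1" "i+1" "i'+1"] kn by simp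
  have "w i > w i'" using A1 A2 ii(3) by linarith
  then have wi: "w i = 1" "w i' = 0" using b1[OF ii(1)] b1[OF ii(2)] by auto
  have B1: "Wn w i k = Wn w i (n+1) + w (i + (n+1))" "Wn w i' k = Wn w i' (n+1) + w (i' + (n+1))"
    using Wn_Suc_right[of w i "n+1"] Wn_Suc_right[of w i' "n+1"] kn by simp_all
  have B2: "Wn w i (n+1) \<le> Wn w i' (n+1) + 1" using minim[of "n+1" i i'] kn ii by simp
  have "i + (n+1) \<ge> 1" "i' + (n+1) \<ge> 1" by auto
  moreover have "w (i + (n+1)) > w (i' + (n+1))" using B1 B2 ii(3) by linarith
  ultimately have wl: "w (i + (n+1)) = 1" "w (i' + (n+1)) = 0" using b1 by fastforce+
  define M where "M = Wn w (i+1) n"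
  define M' where "M' = Wn w (i'+1) n"
  have C1: "Wn w (i+1) (n+1) = M + 1" "Wn w (i'+1) (n+1) = M'"
    unfolding M_def M'_def using Wn_Suc_right[of w "i+1" n] Wn_Suc_right[of w "i'+1" n] wl by (simp_all add: ac_simps)
  have C2: "Wn w (i+1) (n+1) \<le> Wn w (i'+1) (n+1) + 1" using A2 .
  have C3: "Wn w i k = M + 2" "Wn w i' k = M'" using A1 C1 wi by simp_all
  have MM: "M = M'" using C1 C2 C3 ii(3) by simp
  have mid: "\<forall>j<n. w (i + 1 + j) = w (i' + 1 + j)"
  proof (rule ccontr)
    assume "\<not> ?thesis"
    then have exd: "\<exists>d. d < n \<and> w (i + 1 + d) \<noteq> w (i' + 1 + d)" by auto
    define d where "d = (LEAST d. d < n \<and> w (i + 1 + d) \<noteq> w (i' + 1 + d))"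
    have d: "d < n" "w (i + 1 + d) \<noteq> w (i' + 1 + d)"
      using LeastI_ex[OF exd] unfolding d_def by blast+
    have pre: "\<forall>j<d. w (i + 1 + j) = w (i' + 1 + j)"
    proof (intro allI impI)
      fix j assume "j < d"
      then have "\<not> (j < n \<and> w (i + 1 + j) \<noteq> w (i' + 1 + j))" unfolding d_def using not_less_Least by blast
      then show "w (i + 1 + j) = w (i' + 1 + j)" using \<open>j < d\<close> d(1) by auto
    qed
    define X where "X = Wn w (i+1) d"
    have X': "Wn w (i'+1) d = X" unfolding X_def using Wn_cong[OF pre] by simp
    have ld: "w (i + 1 + d) = 0 \<and> w (i' + 1 + d) = 1 \<or> w (i + 1 + d) = 1 \<and> w (i' + 1 + d) = 0"
      using d(2) b1[of "i+1+d"] b1[of "i'+1+d"] by auto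
    then show False
    proof
      assume h: "w (i + 1 + d) = 1 \<and> w (i' + 1 + d) = 0"
      have "Wn w i (d+2) = w i + Wn w (i+1) (d + 1)" using Wn_Suc_left[of w i "d+1"] by simp
      also have "\<dots> = 1 + X + 1" using Wn_Suc_right[of w "i+1" d] wi h unfolding X_def by (simp add: ac_simps)
      finally have e1: "Wn w i (d+2) = X + 2" by simp
      have "Wn w i' (d+2) = w i' + Wn w (i'+1) (d + 1)" using Wn_Suc_left[of w i' "d+1"] by simp
      also have "\<dots> = X" using Wn_Suc_right[of w "i'+1" d] wi h X' by (simp add: ac_simps)
      finally have e2: "Wn w i' (d+2) = X" .
      have "d + 2 < k" using d kn by simp
      then show False using minim[of "d+2" i i'] ii e1 e2 by simp
    next
      assume h: "w (i + 1 + d) = 0 \<and> w (i' + 1 + d) = 1"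
      define Y where "Y = Wn w (i + 2 + d) (n - d - 1)"
      define Y' where "Y' = Wn w (i' + 2 + d) (n - d - 1)"
      have nd: "n = (d + 1) + (n - d - 1)" using d by simp
      have "M = Wn w (i+1) (d+1) + Y"
      proof -
        have "Wn w (i+1) ((d+1) + (n-d-1)) = Wn w (i+1) (d+1) + Wn w (i+1+(d+1)) (n-d-1)" by (rule Wn_add)
        moreover have "i+1+(d+1) = i + 2 + d" by simp
        ultimately show ?thesis unfolding M_def Y_def using nd by metis
      qed
      also have "Wn w (i+1) (d+1) = X" using Wn_Suc_right[of w "i+1" d] h unfolding X_def by (simp add: ac_simps)
      finally have m1: "M = X + Y" .
      have "M' = Wn w (i'+1) (d+1) + Y'"
      proof -
        have "Wn w (i'+1) ((d+1) + (n-d-1)) = Wn w (i'+1) (d+1) + Wn w (i'+1+(d+1)) (n-d-1)" by (rule Wn_add)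
        moreover have "i'+1+(d+1) = i' + 2 + d" by simp
        ultimately show ?thesis unfolding M'_def Y'_def using nd by metis
      qed
      also have "Wn w (i'+1) (d+1) = X + 1" using Wn_Suc_right[of w "i'+1" d] h X' by (simp add: ac_simps)
      finally have m2: "M' = X + 1 + Y'" .
      have "Wn w (i + 2 + d) (n - d) = Y + w (i + 2 + d + (n - d - 1))"
        using Wn_Suc_right[of w "i+2+d" "n-d-1"] d unfolding Y_def by (simp add: Suc_diff_Suc)
      also have "i + 2 + d + (n - d - 1) = i + (n + 1)" using d by simp
      finally have s1: "Wn w (i + 2 + d) (n - d) = Y + 1" using wl by simp
      have "Wn w (i' + 2 + d) (n - d) = Y' + w (i' + 2 + d + (n - d - 1))"
        using Wn_Suc_right[of w "i'+2+d" "n-d-1"] d unfolding Y'_def by (simp add: Suc_diff_Suc)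
      also have "i' + 2 + d + (n - d - 1) = i' + (n + 1)" using d by simp
      finally have s2: "Wn w (i' + 2 + d) (n - d) = Y'" using wl by simp
      have "n - d < k" using kn by simp
      then have "Wn w (i + 2 + d) (n - d) \<le> Wn w (i' + 2 + d) (n - d) + 1"
        using minim[of "n - d" "i+2+d" "i'+2+d"] by simp
      then show False using s1 s2 m1 m2 MM by simp
    qed
  qed
  show ?thesis
  proof (intro exI conjI)
    show "i + 1 \<ge> 2" "i' + 1 \<ge> 2" using ii by auto
    show "w (i + 1 - 1) = 1" "w (i' + 1 - 1) = 0" using wi by simp_all
    show "w (i + 1 + n) = 1" "w (i' + 1 + n) = 0" using wl by (simp_all add: ac_simps)
    show "fac w (i + 1) n = fac w (i' + 1) n" using mid fac_eq_iff by blast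
  qed
qed

lemma nt_walk:
  fixes f :: "nat \<Rightarrow> nat"
  assumes pq: "p \<ge> 1" "q \<ge> 1" "p \<le> n" "q \<le> n" "p + q = n + 2"
    and perp: "\<And>k. 1 \<le> k \<Longrightarrow> k + p \<le> n \<Longrightarrow> f k = f (k + p)"
    and perq: "\<And>k. 1 \<le> k \<Longrightarrow> k + q \<le> n \<Longrightarrow> f k = f (k + q)"
  shows "f p = f (q - 1) \<or> f p = f q"
proof (rule ccontr)
  assume H: "\<not> ?thesis"
  define N where "N = p + q"
  have claim: "\<exists>i. 1 \<le> i \<and> i \<le> n \<and> f i = f p \<and> i mod N = ((t+1)*p) mod N" for t
  proof (induct t)
    case 0 then show ?case using pq by (intro exI[of _ p]) auto
  next
    case (Suc t)
    then obtain i where i: "1 \<le> i" "i \<le> n" "f i = f p" "i mod N = ((t+1)*p) mod N" by blast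
    have "i \<noteq> q - 1" "i \<noteq> q" using H i(3) by auto
    then have "i + 2 \<le> q \<or> q + 1 \<le> i" by auto
    then show ?case
    proof
      assume "i + 2 \<le> q"
      then have le: "i + p \<le> n" using pq by simp
      show ?case
      proof (intro exI conjI)
        show "1 \<le> i + p" "i + p \<le> n" using i le by auto
        show "f (i + p) = f p" using perp[OF i(1) le] i(3) by simp
        have "(i + p) mod N = (i mod N + p) mod N" by (simp add: mod_add_left_eq)
        also have "\<dots> = ((t+1)*p mod N + p) mod N" using i(4) by simp
        also have "\<dots> = ((t+1)*p + p) mod N" by (simp add: mod_add_left_eq)
        finally show "(i + p) mod N = ((Suc t + 1) * p) mod N" by (simp add: algebra_simps)
      qed
    next
      assume qi: "q + 1 \<le> i"
      show ?case
      proof (intro exI conjI)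
        show "1 \<le> i - q" "i - q \<le> n" using qi i by auto
        have "f (i - q) = f (i - q + q)" using perq[of "i - q"] qi i by simp
        then show "f (i - q) = f p" using qi i(3) by simp
        have "(i - q) mod N = (i - q + N) mod N" by simp
        also have "i - q + N = i + p" unfolding N_def using qi by simp
        also have "(i + p) mod N = (i mod N + p) mod N" by (simp add: mod_add_left_eq)
        also have "\<dots> = ((t+1)*p mod N + p) mod N" using i(4) by simp
        also have "\<dots> = ((t+1)*p + p) mod N" by (simp add: mod_add_left_eq)
        finally show "(i - q) mod N = ((Suc t + 1) * p) mod N" by (simp add: algebra_simps)
      qed
    qed
  qed
  obtain i where i: "1 \<le> i" "i \<le> n" "i mod N = ((N - 1 + 1)*p) mod N" using claim[of "N - 1"] by blast
  have "N \<ge> 1" unfolding N_def using pq by simp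
  then have "((N - 1 + 1)*p) mod N = 0" by simp
  moreover have "i mod N = i" using i pq unfolding N_def by simp
  ultimately show False using i by simp
qed


locale stbad =
  fixes w :: "nat \<Rightarrow> nat" and a b n :: nat
  assumes bin: "binary_word w" and st: "sturmian_word w"
    and a2: "a \<ge> 2" and b2: "b \<ge> 2"
    and wa1: "w (a - 1) = 1" and wan: "w (a + n) = 1"
    and wb1: "w (b - 1) = 0" and wbn: "w (b + n) = 0"
    and fab: "fac w a n = fac w b n"
begin

definition sig where "sig = fac w a n"
definition Occ where "Occ = {t. t \<ge> 1 \<and> fac w t n = sig}"

lemma b01: "t \<ge> 1 \<Longrightarrow> w t = 0 \<or> w t = 1" using bin01[OF bin] by blast

lemma a_occ: "a \<in> Occ" and b_occ: "b \<in> Occ"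
  unfolding Occ_def sig_def using a2 b2 fab by auto

lemma occ_ge1: "t \<in> Occ \<Longrightarrow> t \<ge> 1" unfolding Occ_def by auto

lemma len_sig[simp]: "length sig = n" unfolding sig_def by simp

lemma sig_in: "sig \<in> factors w n" unfolding sig_def using fac_in a2 by simp

lemma sig_rs: "rs w sig"
proof -
  have "sig @ [1] = fac w a (Suc n)" unfolding sig_def using fac_Suc_right wan by metis
  moreover have "sig @ [0] = fac w b (Suc n)" unfolding sig_def using fac_Suc_right wbn fab by metis
  ultimately show ?thesis unfolding rs_def using fac_in a2 b2 by simp
qed

lemma uniq: "u \<in> factors w n \<Longrightarrow> rs w u \<Longrightarrow> u = sig"
  using stu_rs_unique[OF bin st _ _ sig_in sig_rs] by blast

lemma det:
  assumes "t \<ge> 1" "t' \<ge> 1" "fac w t n = fac w t' n" "fac w t n \<noteq> sig"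
  shows "w (t + n) = w (t' + n)"
proof (rule ccontr)
  assume ne: "w (t + n) \<noteq> w (t' + n)"
  have f1: "fac w t n @ [w (t+n)] \<in> factors w (Suc n)" using fac_in[OF assms(1), of w "Suc n"] fac_Suc_right by metis
  have f2: "fac w t n @ [w (t'+n)] \<in> factors w (Suc n)" using fac_in[OF assms(2), of w "Suc n"] fac_Suc_right assms(3) by metis
  have "w (t + n) = 0 \<or> w (t + n) = 1" "w (t' + n) = 0 \<or> w (t' + n) = 1" using b01 assms by auto
  then have "rs w (fac w t n)" unfolding rs_def using f1 f2 ne by auto
  then show False using uniq fac_in assms by blast
qed

lemma occ_late: "\<exists>t\<ge>i. t \<in> Occ"
proof -
  obtain t where t: "t \<ge> max i 1" "rs w (fac w t n)" using stu_rs_late[OF bin st, of "max i 1" n] by auto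
  then have "fac w t n = sig" using uniq fac_in by simp
  then show ?thesis using t unfolding Occ_def by auto
qed

definition nxt where "nxt t = (LEAST t'. t < t' \<and> t' \<in> Occ)"

lemma nxt_ex: "\<exists>t'. t < t' \<and> t' \<in> Occ"
proof -
  obtain t' where "t' \<ge> Suc t" "t' \<in> Occ" using occ_late by blast
  then show ?thesis by (intro exI[of _ t']) auto
qed

lemma nxt_gt: "t < nxt t" and nxt_occ: "nxt t \<in> Occ"
  using LeastI_ex[OF nxt_ex[of t]] unfolding nxt_def by auto

lemma nxt_min: "t < s \<Longrightarrow> s < nxt t \<Longrightarrow> s \<notin> Occ"
  unfolding nxt_def using not_less_Least by blast

lemma nxt_le: "t < s \<Longrightarrow> s \<in> Occ \<Longrightarrow> nxt t \<le> s"
  unfolding nxt_def by (rule Least_le) simp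

lemma not_occ_fac: "t \<ge> 1 \<Longrightarrow> t \<notin> Occ \<Longrightarrow> fac w t n \<noteq> sig"
  unfolding Occ_def by auto

lemma block:
  assumes t: "t \<in> Occ" and t': "t' \<in> Occ" and e: "w (t + n) = w (t' + n)"
  shows "(\<forall>s < nxt t' - t' + n. w (t + s) = w (t' + s)) \<and> nxt t = t + (nxt t' - t')"
proof -
  define L where "L = nxt t' - t'"
  have L1: "L \<ge> 1" unfolding L_def using nxt_gt[of t'] by simp
  have t1: "t \<ge> 1" "t' \<ge> 1" using t t' occ_ge1 by auto
  have letters: "\<forall>s. s < L + n \<longrightarrow> w (t + s) = w (t' + s)"
  proof
    fix s show "s < L + n \<longrightarrow> w (t + s) = w (t' + s)"
    proof (induct s rule: less_induct)
      case (less s)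
      show ?case
      proof
        assume sL: "s < L + n"
        show "w (t + s) = w (t' + s)"
        proof (cases "s < n")
          case True
          have "fac w t n = fac w t' n" using t t' unfolding Occ_def by auto
          then show ?thesis using True fac_eq_iff by blast
        next
          case False
          define s0 where "s0 = s - n"
          have s: "s = s0 + n" "s0 < L" using False sL unfolding s0_def by auto
          show ?thesis
          proof (cases "s0 = 0")
            case True then show ?thesis using e s by simp
          next
            case False
            have eqw: "fac w (t + s0) n = fac w (t' + s0) n"
              unfolding fac_eq_iff
            proof (intro allI impI)
              fix j assume "j < n"
              then have "s0 + j < s" "s0 + j < L + n" using s by auto
              then show "w (t + s0 + j) = w (t' + s0 + j)" using less by (simp add: add.assoc)
            qed
            have "t' + s0 \<notin> Occ" using nxt_min[of t' "t' + s0"] False s unfolding L_def by simp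
            then have "fac w (t' + s0) n \<noteq> sig" using not_occ_fac t1 by simp
            then have "w (t + s0 + n) = w (t' + s0 + n)" using det[of "t + s0" "t' + s0"] eqw t1 by auto
            then show ?thesis using s by (simp add: add.assoc)
          qed
        qed
      qed
    qed
  qed
  have facL: "fac w (t + L) n = sig"
  proof -
    have "fac w (t + L) n = fac w (t' + L) n"
      unfolding fac_eq_iff using letters by (simp add: add.assoc)
    also have "t' + L = nxt t'" unfolding L_def using nxt_gt[of t'] by simp
    finally show ?thesis using nxt_occ[of t'] unfolding Occ_def by simp
  qed
  have "nxt t = t + L"
    unfolding nxt_def
  proof (rule Least_equality)
    show "t < t + L \<and> t + L \<in> Occ" using L1 facL t1 unfolding Occ_def by simp
  next
    fix y assume y: "t < y \<and> y \<in> Occ"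
    show "t + L \<le> y"
    proof (rule ccontr)
      assume "\<not> t + L \<le> y"
      then obtain s0 where s0: "y = t + s0" "0 < s0" "s0 < L" using y by (metis add_diff_inverse_nat less_diff_conv2 less_imp_le_nat not_le zero_less_diff add.commute)
      have eqw: "fac w (t + s0) n = fac w (t' + s0) n"
        unfolding fac_eq_iff using letters s0 by (simp add: add.assoc)
      have "t' + s0 \<notin> Occ" using nxt_min[of t' "t' + s0"] s0 unfolding L_def by simp
      then have "fac w (t' + s0) n \<noteq> sig" using not_occ_fac t1 by simp
      then show False using y s0 eqw unfolding Occ_def by simp
    qed
  qed
  then show ?thesis using letters unfolding L_def by simp
qed

definition lam0 where "lam0 = nxt b - b"
definition lam1 where "lam1 = nxt a - a"
definition y0 where "y0 = w (nxt b - 1)"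
definition y1 where "y1 = w (nxt a - 1)"

lemma lam_pos: "lam0 \<ge> 1" "lam1 \<ge> 1"
  unfolding lam0_def lam1_def using nxt_gt[of a] nxt_gt[of b] by auto

lemma prevletter:
  assumes t: "t \<in> Occ"
  shows "w (nxt t - 1) = (if w (t + n) = 0 then y0 else y1)"
proof -
  have t1: "t \<ge> 1" using occ_ge1 t by simp
  show ?thesis
  proof (cases "w (t + n) = 0")
    case True
    then have e: "w (t + n) = w (b + n)" using wbn by simp
    from block[OF t b_occ e] have bl: "\<forall>s < lam0 + n. w (t + s) = w (b + s)" "nxt t = t + lam0"
      unfolding lam0_def by auto
    have "lam0 - 1 < lam0 + n" using lam_pos by simp
    then have "w (t + (lam0 - 1)) = w (b + (lam0 - 1))" using bl(1) by blast
    moreover have "b + (lam0 - 1) = nxt b - 1" unfolding lam0_def using nxt_gt[of b] by simp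
    ultimately show ?thesis using True bl lam_pos unfolding y0_def by simp
  next
    case False
    then have "w (t + n) = 1" using b01[of "t + n"] t1 by auto
    then have e: "w (t + n) = w (a + n)" using wan by simp
    from block[OF t a_occ e] have bl: "\<forall>s < lam1 + n. w (t + s) = w (a + s)" "nxt t = t + lam1"
      unfolding lam1_def by auto
    have "lam1 - 1 < lam1 + n" using lam_pos by simp
    then have "w (t + (lam1 - 1)) = w (a + (lam1 - 1))" using bl(1) by blast
    moreover have "a + (lam1 - 1) = nxt a - 1" unfolding lam1_def using nxt_gt[of a] by simp
    ultimately show ?thesis using False bl lam_pos unfolding y1_def by simp
  qed
qed

lemma has_prev:
  assumes t0: "t0 \<in> Occ" and le: "t0 \<le> \<tau>"
  shows "\<exists>t\<in>Occ. t0 \<le> t \<and> t \<le> \<tau> \<and> \<tau> < nxt t"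
proof -
  define S where "S = {s. s \<in> Occ \<and> t0 \<le> s \<and> s \<le> \<tau>}"
  have fin: "finite S" unfolding S_def by (rule finite_subset[of _ "{..\<tau>}"]) auto
  have ne: "S \<noteq> {}" unfolding S_def using t0 le by auto
  define t where "t = Max S"
  have tS: "t \<in> S" unfolding t_def using fin ne by simp
  have "\<tau> < nxt t"
  proof (rule ccontr)
    assume "\<not> \<tau> < nxt t"
    then have "nxt t \<in> S" unfolding S_def using nxt_occ[of t] nxt_gt[of t] tS unfolding S_def by auto
    then have "nxt t \<le> t" unfolding t_def using fin by simp
    then show False using nxt_gt[of t] by simp
  qed
  then show ?thesis using tS unfolding S_def by auto
qed

lemma has_prev_eq:
  assumes t0: "t0 \<in> Occ" and lt: "t0 < \<tau>" and tau: "\<tau> \<in> Occ"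
  shows "\<exists>t\<in>Occ. t0 \<le> t \<and> t < \<tau> \<and> nxt t = \<tau>"
proof -
  obtain t where t: "t \<in> Occ" "t0 \<le> t" "t \<le> \<tau> - 1" "\<tau> - 1 < nxt t"
  proof -
    have "t0 \<le> \<tau> - 1" using lt by simp
    then show ?thesis using has_prev[OF t0, of "\<tau> - 1"] that by blast
  qed
  have "t < \<tau>" using t lt by simp
  then have "nxt t \<le> \<tau>" using nxt_le tau by simp
  then show ?thesis using t \<open>t < \<tau>\<close> by (intro bexI[of _ t]) auto
qed

lemma sig_letters: "t \<in> Occ \<Longrightarrow> j < n \<Longrightarrow> w (t + j) = w (a + j)"
  unfolding Occ_def sig_def using fac_eq_iff by blast

lemma case1: "y0 = y1 \<Longrightarrow> False"
proof -
  assume eq: "y0 = y1"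
  have get: "\<exists>\<tau>\<in>Occ. b < \<tau> \<and> w (\<tau> - 1) = c" if c: "c = w (i0 - 1)" "i0 \<in> Occ" "i0 \<ge> 2" for c i0
  proof -
    obtain t' where t': "t' \<ge> b" "fac w t' (Suc n) = fac w (i0 - 1) (Suc n)"
    proof -
      have "i0 - 1 \<ge> 1" using c by simp
      then show ?thesis using stu_recurrent[OF bin st, of "i0 - 1" b "Suc n"] that by blast
    qed
    have "fac w (i0 - 1) (Suc n) = w (i0 - 1) # fac w i0 n" using fac_Suc_left[of w "i0 - 1" n] c by simp
    moreover have "fac w t' (Suc n) = w t' # fac w (Suc t') n" by (rule fac_Suc_left)
    ultimately have "w t' = c" "fac w (Suc t') n = sig" using t' c unfolding Occ_def by auto
    moreover have "Suc t' - 1 = t'" by simp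
    ultimately show ?thesis using t' b2 unfolding Occ_def by (intro bexI[of _ "Suc t'"]) auto
  qed
  obtain \<tau>1 where t1: "\<tau>1 \<in> Occ" "b < \<tau>1" "w (\<tau>1 - 1) = 1" using get[of 1 a] wa1 a_occ a2 by auto
  obtain \<tau>2 where t2: "\<tau>2 \<in> Occ" "b < \<tau>2" "w (\<tau>2 - 1) = 0" using get[of 0 b] wb1 b_occ b2 by auto
  obtain s1 where s1: "s1 \<in> Occ" "nxt s1 = \<tau>1" using has_prev_eq[OF b_occ t1(2) t1(1)] by auto
  obtain s2 where s2: "s2 \<in> Occ" "nxt s2 = \<tau>2" using has_prev_eq[OF b_occ t2(2) t2(1)] by auto
  have "w (\<tau>1 - 1) = y0" using prevletter[OF s1(1)] s1(2) eq by (simp split: if_splits)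
  moreover have "w (\<tau>2 - 1) = y0" using prevletter[OF s2(1)] s2(2) eq by (simp split: if_splits)
  ultimately show False using t1 t2 by simp
qed

lemma fac_around:
  assumes "t \<ge> 1"
  shows "fac w (t - 1) (Suc (Suc n)) = w (t - 1) # fac w t n @ [w (t + n)]"
proof -
  have "fac w (t - 1) (Suc (Suc n)) = w (t - 1) # fac w (Suc (t - 1)) (Suc n)" by (rule fac_Suc_left)
  also have "Suc (t - 1) = t" using assms by simp
  finally have "fac w (t - 1) (Suc (Suc n)) = w (t - 1) # fac w t (Suc n)" .
  moreover have "fac w t (Suc n) = fac w t n @ [w (t + n)]" by (rule fac_Suc_right)
  ultimately show ?thesis by simp
qed

lemma rec_letter:
  assumes "t0 \<ge> 1" "e' = 0 \<or> e' = 1"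
  shows "\<exists>\<tau>1\<in>Occ. t0 < \<tau>1 \<and> w (\<tau>1 + n) = e'"
proof -
  obtain r where r: "r \<in> Occ" "w (r + n) = e'"
  proof (cases "e' = 0")
    case True then show ?thesis using that b_occ wbn by blast
  next
    case False then have "e' = 1" using assms(2) by blast
    then show ?thesis using that a_occ wan by blast
  qed
  have "r \<ge> 1" using occ_ge1 r by simp
  then obtain t1 where t1: "t1 \<ge> Suc t0" "fac w t1 (Suc n) = fac w r (Suc n)"
    using stu_recurrent[OF bin st, of r "Suc t0" "Suc n"] by blast
  then have "fac w t1 n @ [w (t1 + n)] = fac w r n @ [w (r + n)]"
    using fac_Suc_right[of w t1 n] fac_Suc_right[of w r n] by metis
  then have "fac w t1 n = fac w r n" "w (t1 + n) = w (r + n)" by simp_all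
  then have "fac w t1 n = sig" "w (t1 + n) = e'" using r unfolding Occ_def by auto
  then show ?thesis using t1 unfolding Occ_def by (intro bexI[of _ t1]) auto
qed

lemma trans_occ:
  assumes t0: "t0 \<in> Occ" and e: "w (t0 + n) = e" and ee: "e' \<noteq> e" "e' = 0 \<or> e' = 1" "e = 0 \<or> e = 1"
  shows "\<exists>\<tau>\<in>Occ. t0 < \<tau> \<and> w (\<tau> + n) = e' \<and> (\<exists>t\<in>Occ. nxt t = \<tau> \<and> w (t + n) = e)"
proof -
  define Q where "Q \<tau> \<longleftrightarrow> \<tau> \<in> Occ \<and> t0 < \<tau> \<and> w (\<tau> + n) = e'" for \<tau>
  obtain \<tau>1 where "\<tau>1 \<in> Occ" "t0 < \<tau>1" "w (\<tau>1 + n) = e'" using rec_letter[of t0 e'] occ_ge1[OF t0] ee(2) by blast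
  then have ex: "\<exists>\<tau>. Q \<tau>" unfolding Q_def by blast
  define \<tau> where "\<tau> = (LEAST \<tau>. Q \<tau>)"
  have Q: "Q \<tau>" unfolding \<tau>_def using LeastI_ex[OF ex] .
  then have Q': "\<tau> \<in> Occ" "t0 < \<tau>" "w (\<tau> + n) = e'" unfolding Q_def by auto
  obtain t where t: "t \<in> Occ" "t0 \<le> t" "t < \<tau>" "nxt t = \<tau>"
    using has_prev_eq[OF t0 Q'(2) Q'(1)] by blast
  have "w (t + n) = e"
  proof (cases "t = t0")
    case True then show ?thesis using e by simp
  next
    case False
    have "t < (LEAST \<tau>. Q \<tau>)" using t(3) unfolding \<tau>_def .
    then have "\<not> Q t" by (rule not_less_Least)
    moreover have "t0 < t" using t(2) False by simp
    ultimately have "w (t + n) \<noteq> e'" unfolding Q_def using t(1) by blast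
    moreover have "w (t + n) = 0 \<or> w (t + n) = 1" using b01 occ_ge1[OF t(1)] by simp
    ultimately show ?thesis using ee by auto
  qed
  then show ?thesis using Q' t by blast
qed

lemma case2: "y0 = 0 \<Longrightarrow> y1 = 1 \<Longrightarrow> False"
proof -
  assume y: "y0 = 0" "y1 = 1"
  obtain \<tau> t where A: "\<tau> \<in> Occ" "b < \<tau>" "w (\<tau> + n) = 1" "t \<in> Occ" "nxt t = \<tau>" "w (t + n) = 0"
    using trans_occ[OF b_occ wbn, of 1] by auto
  have wA: "w (\<tau> - 1) = 0" using prevletter[OF A(4)] A y by simp
  obtain \<tau>' t' where B: "\<tau>' \<in> Occ" "a < \<tau>'" "w (\<tau>' + n) = 0" "t' \<in> Occ" "nxt t' = \<tau>'" "w (t' + n) = 1"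
    using trans_occ[OF a_occ wan, of 0] by auto
  have wB: "w (\<tau>' - 1) = 1" using prevletter[OF B(4)] B y by simp
  have Afac: "fac w \<tau> n = sig" "fac w \<tau>' n = sig" "fac w a n = sig" "fac w b n = sig"
    using A B a_occ b_occ unfolding Occ_def by auto
  have f1: "(0 # sig) @ [1] \<in> factors w (Suc (length (0 # sig)))"
    using fac_around[of \<tau>] fac_in[of "\<tau> - 1" w "Suc (Suc n)"] A(2) b2 Afac wA A(3) by simp
  have f2: "(0 # sig) @ [0] \<in> factors w (Suc (length (0 # sig)))"
    using fac_around[of b] fac_in[of "b - 1" w "Suc (Suc n)"] b2 Afac wb1 wbn by simp
  have f3: "(1 # sig) @ [0] \<in> factors w (Suc (length (1 # sig)))"
    using fac_around[of \<tau>'] fac_in[of "\<tau>' - 1" w "Suc (Suc n)"] B(2) a2 Afac wB B(3) by simp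
  have f4: "(1 # sig) @ [1] \<in> factors w (Suc (length (1 # sig)))"
    using fac_around[of a] fac_in[of "a - 1" w "Suc (Suc n)"] a2 Afac wa1 wan by simp
  have r0: "rs w (0 # sig)" using f1 f2 unfolding rs_def by simp
  have r1: "rs w (1 # sig)" using f3 f4 unfolding rs_def by simp
  have i0: "0 # sig \<in> factors w (Suc n)" using prefix_factor f1 by simp
  have i1: "1 # sig \<in> factors w (Suc n)" using prefix_factor f3 by simp
  have "0 # sig = 1 # sig" using stu_rs_unique[OF bin st i0 r0 i1 r1] .
  then show False by simp
qed

lemma inblock: "t \<in> Occ \<Longrightarrow> 0 < s \<Longrightarrow> s < nxt t - t \<Longrightarrow> fac w (t + s) n \<noteq> sig"
  using nxt_min[of t "t + s"] not_occ_fac[of "t + s"] occ_ge1[of t] by auto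

lemma forward:
  assumes "p \<ge> 1" "p' \<ge> 1" "fac w p n = fac w p' n" "\<forall>r<R. fac w (p + r) n \<noteq> sig"
  shows "fac w (p + R) n = fac w (p' + R) n"
  using assms(4)
proof (induct R)
  case 0 then show ?case using assms(3) by simp
next
  case (Suc R)
  then have ih: "fac w (p + R) n = fac w (p' + R) n" by simp
  have "fac w (p + R) n \<noteq> sig" using Suc.prems by simp
  then have "w (p + R + n) = w (p' + R + n)" using det[of "p + R" "p' + R"] ih assms(1,2) by simp
  then show ?case using ih fac_step[of w "p + R" n] fac_step[of w "p' + R" n] by simp
qed

lemma inj_block:
  assumes t: "t \<in> Occ"
  shows "inj_on (\<lambda>s. fac w (t + s) n) {..<nxt t - t}"
proof -
  define L where "L = nxt t - t"
  have t1: "t \<ge> 1" using occ_ge1 t by simp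
  have main: "False" if ss: "s < s'" "s' < L" "fac w (t + s) n = fac w (t + s') n" for s s'
  proof (cases "s = 0")
    case True
    then have "fac w (t + s') n = sig" using ss t unfolding Occ_def by simp
    then show False using inblock[OF t, of s'] ss True unfolding L_def by simp
  next
    case False
    have "fac w (t + s' + (L - s')) n = fac w (t + s + (L - s')) n"
    proof (rule forward)
      show "t + s' \<ge> 1" "t + s \<ge> 1" using t1 by auto
      show "fac w (t + s') n = fac w (t + s) n" using ss by simp
      show "\<forall>r<L - s'. fac w (t + s' + r) n \<noteq> sig"
        using inblock[OF t] ss unfolding L_def by (simp add: add.assoc)
    qed
    moreover have "t + s' + (L - s') = nxt t" using ss nxt_gt[of t] unfolding L_def by simp
    moreover have "fac w (t + (s + (L - s'))) n \<noteq> sig"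
      using inblock[OF t, of "s + (L - s')"] ss False unfolding L_def by simp
    ultimately show False using nxt_occ[of t] unfolding Occ_def by (simp add: add.assoc)
  qed
  show ?thesis unfolding inj_on_def L_def[symmetric]
  proof (intro ballI impI)
    fix s s' assume "s \<in> {..<L}" "s' \<in> {..<L}" "fac w (t + s) n = fac w (t + s') n"
    then show "s = s'" using main[of s s'] main[of s' s] by (cases s s' rule: linorder_cases) auto
  qed
qed

lemma cross:
  assumes t: "t \<in> Occ" and t': "t' \<in> Occ"
    and s: "0 < s" "s < nxt t - t" and s': "0 < s'" "s' < nxt t' - t'"
    and eq: "fac w (t + s) n = fac w (t' + s') n"
    and le: "nxt t - t - s \<le> nxt t' - t' - s'" and n1: "n \<ge> 1"
  shows "w (nxt t - 1) = w (nxt t' - 1)"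
proof -
  define L where "L = nxt t - t"
  define L' where "L' = nxt t' - t'"
  define R where "R = L - s"
  have t1: "t \<ge> 1" "t' \<ge> 1" using occ_ge1 t t' by auto
  have fw: "fac w (t + s + R') n = fac w (t' + s' + R') n" if "R' \<le> R" for R'
  proof (rule forward)
    show "t + s \<ge> 1" "t' + s' \<ge> 1" using t1 by auto
    show "fac w (t + s) n = fac w (t' + s') n" by (rule eq)
    show "\<forall>r<R'. fac w (t + s + r) n \<noteq> sig"
      using inblock[OF t] s that unfolding R_def L_def by (simp add: add.assoc)
  qed
  have R1: "R \<ge> 1" unfolding R_def L_def using s by simp
  have "t + s + R = nxt t" unfolding R_def L_def using s nxt_gt[of t] by simp
  then have "fac w (t' + s' + R) n = sig" using fw[of R] nxt_occ[of t] unfolding Occ_def by simp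
  then have "\<not> (s' + R < L')"
  proof (intro notI)
    assume "fac w (t' + s' + R) n = sig" "s' + R < L'"
    moreover have "0 < s' + R" using s' by simp
    ultimately show False using inblock[OF t', of "s' + R"] unfolding L'_def by (simp add: add.assoc)
  qed
  then have eqL: "s' + R = L'" using le s' R1 unfolding R_def L_def L'_def by simp
  have "fac w (t + s + (R - 1)) n = fac w (t' + s' + (R - 1)) n" using fw[of "R - 1"] by simp
  moreover have "t + s + (R - 1) = nxt t - 1" unfolding R_def L_def using s nxt_gt[of t] by simp
  moreover have "t' + s' + (R - 1) = nxt t' - 1" using eqL R1 nxt_gt[of t'] unfolding L'_def by simp
  ultimately have "fac w (nxt t - 1) n = fac w (nxt t' - 1) n" by simp
  then show ?thesis using fac_nth[of 0 n w "nxt t - 1"] fac_nth[of 0 n w "nxt t' - 1"] n1 by simp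
qed

lemma block_data:
  assumes T: "T \<in> Occ" and lam: "lam = nxt T - T" and ln: "lam \<le> n"
  shows "\<And>k. 1 \<le> k \<Longrightarrow> k + lam \<le> n \<Longrightarrow> w (a + k - 1) = w (a + (k + lam) - 1)"
    and "w (nxt T - 1) = w (a + lam - 1)"
    and "w (T + n) = w (a + (n - lam + 1) - 1)"
proof -
  have lp: "lam \<ge> 1" "nxt T = T + lam" using lam nxt_gt[of T] by auto
  have L: "\<And>t k. t \<in> Occ \<Longrightarrow> 1 \<le> k \<Longrightarrow> k \<le> n \<Longrightarrow> w (t + k - 1) = w (a + k - 1)"
  proof -
    fix t k :: nat assume "t \<in> Occ" "1 \<le> k" "k \<le> n"
    then have "k - 1 < n" by simp
    then have "w (t + (k - 1)) = w (a + (k - 1))" using sig_letters \<open>t \<in> Occ\<close> by blast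
    then show "w (t + k - 1) = w (a + k - 1)" using \<open>1 \<le> k\<close> by simp
  qed
  show "w (a + k - 1) = w (a + (k + lam) - 1)" if "1 \<le> k" "k + lam \<le> n" for k
  proof -
    have "w (nxt T + k - 1) = w (a + k - 1)" using L[OF nxt_occ[of T]] that by simp
    moreover have "w (T + (k + lam) - 1) = w (a + (k + lam) - 1)" using L[OF T, of "k + lam"] that by simp
    moreover have "nxt T + k - 1 = T + (k + lam) - 1" using lp by simp
    ultimately show ?thesis by simp
  qed
  show "w (nxt T - 1) = w (a + lam - 1)"
    using L[OF T, of lam] lp ln by simp
  show "w (T + n) = w (a + (n - lam + 1) - 1)"
  proof -
    have "w (nxt T + (n - lam + 1) - 1) = w (a + (n - lam + 1) - 1)"
      using L[OF nxt_occ[of T], of "n - lam + 1"] lp ln by simp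
    moreover have "nxt T + (n - lam + 1) - 1 = T + n" using lp ln by simp
    ultimately show ?thesis by simp
  qed
qed

lemma const_run:
  fixes f :: "nat \<Rightarrow> nat"
  assumes step: "\<And>k. 1 \<le> k \<Longrightarrow> k + 1 \<le> n \<Longrightarrow> f k = f (k + 1)" and n1: "1 \<le> n"
  shows "f 1 = f n"
proof -
  have "f (1 + j) = f 1" if "1 + j \<le> n" for j
    using that
  proof (induct j)
    case (Suc j)
    then have ih: "f (1 + j) = f 1" by simp
    have "f (1 + j) = f (1 + j + 1)" by (rule step) (use Suc.prems in auto)
    then show ?case using ih by simp
  qed simp
  from this[of "n - 1"] show ?thesis using n1 by simp
qed

lemma case3: "y0 = 1 \<Longrightarrow> y1 = 0 \<Longrightarrow> False"
proof -
  assume y: "y0 = 1" "y1 = 0"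
  have n1: "n \<ge> 1"
  proof (rule ccontr)
    assume "\<not> n \<ge> 1"
    then have n0: "n = 0" by simp
    have "b + 1 \<in> Occ" unfolding Occ_def sig_def using n0 by (simp add: fac_def)
    then have "nxt b \<le> b + 1" using nxt_le[of b "b+1"] by simp
    then have "nxt b = b + 1" using nxt_gt[of b] by simp
    then have "y0 = w (b + n)" unfolding y0_def using n0 by simp
    then show False using y wbn by simp
  qed
  define W0 where "W0 = (\<lambda>s. fac w (b + s) n) ` {..<lam0}"
  define W1 where "W1 = (\<lambda>s. fac w (a + s) n) ` {..<lam1}"
  have cW0: "card W0 = lam0" unfolding W0_def lam0_def using inj_block[OF b_occ] by (simp add: card_image)
  have cW1: "card W1 = lam1" unfolding W1_def lam1_def using inj_block[OF a_occ] by (simp add: card_image)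
  have inter: "W0 \<inter> W1 = {sig}"
  proof
    show "{sig} \<subseteq> W0 \<inter> W1" unfolding W0_def W1_def using lam_pos a_occ b_occ unfolding Occ_def
      by (auto intro!: image_eqI[of _ _ 0])
    show "W0 \<inter> W1 \<subseteq> {sig}"
    proof
      fix u assume "u \<in> W0 \<inter> W1"
      then obtain s s' where ss: "s < lam0" "s' < lam1" "u = fac w (b + s) n" "u = fac w (a + s') n"
        unfolding W0_def W1_def by auto
      show "u \<in> {sig}"
      proof (cases "s = 0 \<or> s' = 0")
        case True then show ?thesis using ss a_occ b_occ unfolding Occ_def by auto
      next
        case False
        have eq: "fac w (b + s) n = fac w (a + s') n" using ss by simp
        have "w (nxt b - 1) = w (nxt a - 1)"
        proof (cases "nxt b - b - s \<le> nxt a - a - s'")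
          case True
          then show ?thesis using cross[OF b_occ a_occ _ _ _ _ eq True n1] ss False
            unfolding lam0_def lam1_def by simp
        next
          case F2: False
          then show ?thesis using cross[OF a_occ b_occ _ _ _ _ eq[symmetric] _ n1] ss False
            unfolding lam0_def lam1_def by simp
        qed
        then show ?thesis using y unfolding y0_def y1_def by simp
      qed
    qed
  qed
  have cover: "factors w n \<subseteq> W0 \<union> W1"
  proof
    fix u assume "u \<in> factors w n"
    then obtain i where i: "i \<ge> 1" "u = fac w i n" unfolding factors_eq by auto
    obtain \<tau> where tau: "\<tau> \<ge> b" "fac w \<tau> n = u" using stu_recurrent[OF bin st i(1), of b n] i by auto
    obtain t where t: "t \<in> Occ" "b \<le> t" "t \<le> \<tau>" "\<tau> < nxt t" using has_prev[OF b_occ tau(1)] by auto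
    have t1: "t \<ge> 1" using occ_ge1 t by simp
    show "u \<in> W0 \<union> W1"
    proof (cases "w (t + n) = 0")
      case True
      then have "w (t + n) = w (b + n)" using wbn by simp
      from block[OF t(1) b_occ this] have bl: "\<forall>s < lam0 + n. w (t + s) = w (b + s)" "nxt t = t + lam0"
        unfolding lam0_def by auto
      define s where "s = \<tau> - t"
      have s: "\<tau> = t + s" "s < lam0" using t bl unfolding s_def by auto
      have "fac w \<tau> n = fac w (b + s) n" unfolding fac_eq_iff using bl s by (simp add: add.assoc)
      then have "u = fac w (b + s) n" using tau by simp
      then show ?thesis unfolding W0_def using s(2) by blast
    next
      case False
      then have "w (t + n) = 1" using b01[of "t + n"] t1 by auto
      then have "w (t + n) = w (a + n)" using wan by simp
      from block[OF t(1) a_occ this] have bl: "\<forall>s < lam1 + n. w (t + s) = w (a + s)" "nxt t = t + lam1"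
        unfolding lam1_def by auto
      define s where "s = \<tau> - t"
      have s: "\<tau> = t + s" "s < lam1" using t bl unfolding s_def by auto
      have "fac w \<tau> n = fac w (a + s) n" unfolding fac_eq_iff using bl s by (simp add: add.assoc)
      then have "u = fac w (a + s) n" using tau by simp
      then show ?thesis unfolding W1_def using s(2) by blast
    qed
  qed
  have sub: "W0 \<union> W1 \<subseteq> factors w n" unfolding W0_def W1_def using fac_in a2 b2 by auto
  have finW: "finite W0" "finite W1" unfolding W0_def W1_def by auto
  have cU: "card (W0 \<union> W1) = lam0 + lam1 - 1"
    using card_Un_Int[OF finW] cW0 cW1 inter by simp
  have "card (factors w n) \<le> card (W0 \<union> W1)" by (rule card_mono) (use finW cover in auto)
  moreover have "card (W0 \<union> W1) \<le> card (factors w n)" by (rule card_mono) (use finite_factors[OF bin] sub in auto)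
  ultimately have sum: "lam0 + lam1 = n + 2" using cU stu_card[OF st, of n] lam_pos by simp
  define f where "f k = w (a + k - 1)" for k
  have lamdefs: "lam0 = nxt b - b" "lam1 = nxt a - a" unfolding lam0_def lam1_def by auto
  show False
  proof (cases "lam0 \<le> n \<and> lam1 \<le> n")
    case True
    note B0 = block_data[OF b_occ lamdefs(1)] and B1 = block_data[OF a_occ lamdefs(2)]
    have per0: "\<And>k. 1 \<le> k \<Longrightarrow> k + lam0 \<le> n \<Longrightarrow> f k = f (k + lam0)" unfolding f_def using B0(1) True by blast
    have per1: "\<And>k. 1 \<le> k \<Longrightarrow> k + lam1 \<le> n \<Longrightarrow> f k = f (k + lam1)" unfolding f_def using B1(1) True by blast
    have "f lam0 = 1" using B0(2) True y unfolding f_def y0_def by simp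
    moreover have "f lam1 = 0" using B1(2) True y unfolding f_def y1_def by simp
    moreover have "f (lam1 - 1) = 0"
    proof -
      have "lam1 - 1 = n - lam0 + 1" using sum True by arith
      then show ?thesis using B0(3) True wbn unfolding f_def by simp
    qed
    moreover have "f lam0 = f (lam1 - 1) \<or> f lam0 = f lam1"
      by (rule nt_walk[OF lam_pos(1) lam_pos(2) _ _ sum per0 per1]) (use True in auto)
    ultimately show False by auto
  next
    case False
    then show False
    proof (cases "lam0 \<le> n")
      case True
      then have l: "lam1 > n" using False by simp
      then have l0: "lam0 = 1" using sum lam_pos by simp
      note B0 = block_data[OF b_occ lamdefs(1)]
      have per: "\<And>k. 1 \<le> k \<Longrightarrow> k + 1 \<le> n \<Longrightarrow> f k = f (k + 1)" unfolding f_def using B0(1) l0 True by metis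
      have "f 1 = f n" by (rule const_run[of f, OF per n1])
      moreover have "f 1 = 1" using B0(2) True l0 y unfolding f_def y0_def by simp
      moreover have "f n = 0" using B0(3) True l0 wbn unfolding f_def by simp
      ultimately show False by simp
    next
      case F2: False
      then have l0: "lam1 = 1" using sum lam_pos by simp
      then have True: "lam1 \<le> n" using n1 by simp
      note B1 = block_data[OF a_occ lamdefs(2)]
      have per: "\<And>k. 1 \<le> k \<Longrightarrow> k + 1 \<le> n \<Longrightarrow> f k = f (k + 1)" unfolding f_def using B1(1) l0 True by metis
      have "f 1 = f n" by (rule const_run[of f, OF per n1])
      moreover have "f 1 = 0" using B1(2) True l0 y unfolding f_def y1_def by simp
      moreover have "f n = 1" using B1(3) True l0 wan unfolding f_def by simp
      ultimately show False by simp
    qed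
  qed
qed

theorem contradiction: False
proof -
  have "y0 = 0 \<or> y0 = 1" "y1 = 0 \<or> y1 = 1"
    unfolding y0_def y1_def using b01 nxt_gt[of a] nxt_gt[of b] a2 b2 by auto
  then show False using case1 case2 case3 by auto
qed

end

theorem sturmian_balanced:
  assumes "binary_word w" "sturmian_word w"
  shows "balanced w"
proof (rule ccontr)
  assume "\<not> balanced w"
  then obtain a b n where "a \<ge> 2 \<and> b \<ge> 2 \<and> w (a - 1) = 1 \<and> w (a + n) = 1 \<and> w (b - 1) = 0 \<and> w (b + n) = 0
           \<and> fac w a n = fac w b n" using unbal_pair[OF assms(1)] by blast
  then interpret stbad w a b n using assms by unfold_locales auto
  show False by (rule contradiction)
qed


definition unif_lower :: "(nat \<Rightarrow> nat) \<Rightarrow> real \<Rightarrow> bool" where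
  "unif_lower w \<alpha> \<longleftrightarrow> (\<forall>\<delta>>0. \<exists>l0. \<forall>l\<ge>l0. \<forall>i\<ge>1. (\<alpha> - \<delta>) * real l \<le> real (Wn w i l))"

lemma prefix_sum_Wn: "(\<Sum>i=1..N. real (w i)) = real (Wn w 1 N)"
  unfolding Wn_def by (simp add: sum.atLeast1_atMost_eq)

lemma Wn_mult: "Wn w i (k * l) = (\<Sum>j<k. Wn w (i + j * l) l)"
proof (induct k)
  case (Suc k)
  have "Wn w i (Suc k * l) = Wn w i (k * l + l)" by (simp add: add.commute)
  also have "\<dots> = Wn w i (k * l) + Wn w (i + k * l) l" by (rule Wn_add)
  finally show ?case using Suc by simp
qed simp

lemma slope_sub:
  assumes "has_slope w \<alpha>" "l \<ge> 1"
  shows "(\<lambda>k. real (Wn w 1 ((k+1) * l)) / real ((k+1) * l)) \<longlonglongrightarrow> \<alpha>"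
proof -
  have sm: "strict_mono (\<lambda>k::nat. (k+1) * l)" unfolding strict_mono_def using assms(2) by simp
  have "(\<lambda>n. (\<Sum>i=1..n. real (w i)) / real n) \<longlonglongrightarrow> \<alpha>" using assms(1) unfolding has_slope_def .
  from LIMSEQ_subseq_LIMSEQ[OF this sm] show ?thesis unfolding o_def prefix_sum_Wn .
qed

lemma balanced_lower:
  assumes bin: "binary_word w" and bal: "balanced w" and sl: "has_slope w \<alpha>"
  shows "unif_lower w \<alpha>"
  unfolding unif_lower_def
proof (intro allI impI)
  fix \<delta> :: real assume d: "\<delta> > 0"
  obtain l00 :: nat where l00: "real l00 \<ge> 1 / \<delta>" using real_arch_simple by blast
  define l0 where "l0 = l00 + 1"
  have l0: "real l0 \<ge> 1 / \<delta>" "l0 \<ge> 1" using l00 unfolding l0_def by auto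
  show "\<exists>l0. \<forall>l\<ge>l0. \<forall>i\<ge>1. (\<alpha> - \<delta>) * real l \<le> real (Wn w i l)"
  proof (intro exI[of _ l0] allI impI)
    fix l i :: nat assume l: "l \<ge> l0" and i: "i \<ge> 1"
    have l1: "l \<ge> 1" using l l0 by simp
    have bound: "real (Wn w 1 ((k+1) * l)) / real ((k+1) * l) \<le> (real (Wn w i l) + 1) / real l" for k
    proof -
      have "Wn w 1 ((k+1) * l) = (\<Sum>j<k+1. Wn w (1 + j * l) l)" by (rule Wn_mult)
      also have "\<dots> \<le> (\<Sum>j<k+1. Wn w i l + 1)"
        by (rule sum_mono) (use bal i in \<open>auto simp: balanced_def\<close>)
      also have "\<dots> = (k+1) * (Wn w i l + 1)" by simp
      finally have "real (Wn w 1 ((k+1) * l)) \<le> real ((k+1) * (Wn w i l + 1))" by (simp only: of_nat_le_iff)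
      then have "real (Wn w 1 ((k+1) * l)) \<le> real (k+1) * (real (Wn w i l) + 1)" by (simp add: algebra_simps)
      moreover have "real ((k+1) * l) = real (k+1) * real l" by (simp only: of_nat_mult)
      moreover have "real (k+1) > 0" "real l > 0" using l1 by auto
      ultimately show ?thesis
        by (metis divide_right_mono mult_pos_pos less_imp_le nonzero_mult_divide_mult_cancel_left less_irrefl)
    qed
    have "\<alpha> \<le> (real (Wn w i l) + 1) / real l"
      by (rule LIMSEQ_le_const2[OF slope_sub[OF sl l1]]) (use bound in auto)
    then have "\<alpha> * real l \<le> real (Wn w i l) + 1" using l1 by (simp add: field_simps)
    moreover have "\<delta> * real l \<ge> 1"
    proof -
      have "real l \<ge> 1 / \<delta>" using l l0 by simp
      then show ?thesis using d by (simp add: field_simps)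
    qed
    ultimately show "(\<alpha> - \<delta>) * real l \<le> real (Wn w i l)" by (simp add: algebra_simps)
  qed
qed

lemma periodic_lower:
  assumes bin: "binary_word w" and per: "periodic_word w" and sl: "has_slope w \<alpha>"
  shows "unif_lower w \<alpha>"
proof -
  obtain p where p: "p \<ge> 1" "\<forall>i\<ge>1. w (i + p) = w i" using per unfolding periodic_word_def by blast
  define S where "S = Wn w 1 p"
  have win: "Wn w i p = S" if "i \<ge> 1" for i
    using that
  proof (induct i rule: dec_induct)
    case (step i)
    have "Wn w i (Suc p) = w i + Wn w (Suc i) p" by (rule Wn_Suc_left)
    moreover have "Wn w i (Suc p) = Wn w i p + w (i + p)" by (rule Wn_Suc_right)
    moreover have "w (i + p) = w i" using p step by simp
    ultimately show ?case using step by simp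
  qed (simp add: S_def)
  have multi: "Wn w i (k * p) = k * S" if "i \<ge> 1" for i k
    unfolding Wn_mult using win that by simp
  have Sp: "S \<le> p" unfolding S_def by (rule Wn_le[OF bin]) simp
  have "(\<lambda>k. real (Wn w 1 ((k+1) * p)) / real ((k+1) * p)) \<longlonglongrightarrow> \<alpha>" by (rule slope_sub[OF sl p(1)])
  moreover have "(\<lambda>k. real (Wn w 1 ((k+1) * p)) / real ((k+1) * p)) = (\<lambda>k. real S / real p)"
  proof (rule ext)
    fix k
    have "real (Wn w 1 ((k+1) * p)) = real (k+1) * real S" using multi[of 1 "k+1"] by (simp add: algebra_simps)
    moreover have "real ((k+1) * p) = real (k+1) * real p" by (simp only: of_nat_mult)
    moreover have "real (k+1) > 0" by simp
    ultimately show "real (Wn w 1 ((k+1) * p)) / real ((k+1) * p) = real S / real p" by simp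
  qed
  ultimately have "(\<lambda>k. real S / real p) \<longlonglongrightarrow> \<alpha>" by simp
  then have al: "\<alpha> = real S / real p" using LIMSEQ_unique tendsto_const by blast
  have a0: "\<alpha> \<ge> 0" "\<alpha> \<le> 1"
  proof -
    show "\<alpha> \<ge> 0" unfolding al by simp
    have "real S \<le> real p" using Sp by simp
    then show "\<alpha> \<le> 1" unfolding al using p(1) by (simp add: divide_le_eq)
  qed
  show ?thesis unfolding unif_lower_def
  proof (intro allI impI)
    fix \<delta> :: real assume d: "\<delta> > 0"
    obtain l0 :: nat where l0: "real l0 \<ge> real p / \<delta>" using real_arch_simple by blast
    show "\<exists>l0. \<forall>l\<ge>l0. \<forall>i\<ge>1. (\<alpha> - \<delta>) * real l \<le> real (Wn w i l)"
    proof (intro exI[of _ l0] allI impI)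
      fix l i :: nat assume l: "l \<ge> l0" and i: "i \<ge> 1"
      define k where "k = l div p"
      have "k * p \<le> l" unfolding k_def by simp
      then have "Wn w i l = Wn w i (k * p) + Wn w (i + k * p) (l - k * p)"
        using Wn_add[of w i "k * p" "l - k * p"] by simp
      then have ge: "real (Wn w i l) \<ge> real k * real S" using multi[OF i, of k] by simp
      have "l = k * p + l mod p" unfolding k_def by simp
      moreover have "l mod p < p" using p(1) by simp
      ultimately have "l < (k + 1) * p" by (simp add: algebra_simps)
      then have "real l \<le> real ((k + 1) * p)" by (simp only: of_nat_le_iff less_imp_le)
      then have "real l \<le> (real k + 1) * real p" by (simp add: algebra_simps)
      then have "\<alpha> * real l \<le> \<alpha> * ((real k + 1) * real p)" using a0 by (simp add: mult_left_mono)
      also have "\<dots> = real k * real S + \<alpha> * real p" using al p(1) by (simp add: field_simps)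
      also have "\<dots> \<le> real k * real S + real p" using a0 p(1) by (simp add: mult_left_le_one_le)
      finally have A: "\<alpha> * real l \<le> real k * real S + real p" .
      have "\<delta> * real l \<ge> real p"
      proof -
        have "real l \<ge> real p / \<delta>" using l l0 by simp
        then show ?thesis using d by (simp add: field_simps)
      qed
      then show "(\<alpha> - \<delta>) * real l \<le> real (Wn w i l)" using A ge by (simp add: algebra_simps)
    qed
  qed
qed


definition SA :: "nat \<Rightarrow> (nat \<Rightarrow> nat) \<Rightarrow> (bidx \<Rightarrow> 'a::field) \<Rightarrow> bidx \<Rightarrow> 'a" where
  "SA m w u e = (case e of Bz i j \<Rightarrow> if 1 \<le> j \<and> j \<le> m + w i then u (Bz i (j - 1)) else 0 | _ \<Rightarrow> 0)"

definition SB :: "nat \<Rightarrow> (nat \<Rightarrow> nat) \<Rightarrow> (bidx \<Rightarrow> 'a::field) \<Rightarrow> bidx \<Rightarrow> 'a" where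
  "SB m w u e = (case e of Bz i j \<Rightarrow> if j = 1 \<and> 1 \<le> i then u (Bz (i - 1) (m + w (i - 1))) else 0 | _ \<Rightarrow> 0)"

lemma bprod_Ba: "bprod m w b1 Ba = Some e \<longleftrightarrow>
   (case e of Bz i j \<Rightarrow> 1 \<le> j \<and> j \<le> m + w i \<and> b1 = Bz i (j - 1) | _ \<Rightarrow> False)"
  by (cases b1; cases e) auto

lemma bprod_Bb: "bprod m w b1 Bb = Some e \<longleftrightarrow>
   (case e of Bz i j \<Rightarrow> j = 1 \<and> 1 \<le> i \<and> b1 = Bz (i - 1) (m + w (i - 1)) | _ \<Rightarrow> False)"
  by (cases b1; cases e) auto

lemma bprod_other: "b2 \<noteq> Ba \<Longrightarrow> b2 \<noteq> Bb \<Longrightarrow> bprod m w b1 b2 = None"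
  by (cases b1; cases b2) auto

lemma sum_two:
  assumes "finite X" "\<And>b. b \<notin> X \<Longrightarrow> h b = 0" "\<And>b. b \<noteq> Ba \<Longrightarrow> b \<noteq> Bb \<Longrightarrow> h b = 0"
  shows "sum h X = h Ba + h Bb"
proof -
  have "sum h X = sum h (X \<union> {Ba, Bb})"
    by (rule sum.mono_neutral_left) (use assms in auto)
  also have "\<dots> = sum h {Ba, Bb}"
    by (rule sum.mono_neutral_right) (use assms in auto)
  finally show ?thesis by simp
qed

lemma sum_one:
  fixes u :: "bidx \<Rightarrow> 'a::field"
  assumes "finite U" "\<And>b. b \<notin> U \<Longrightarrow> u b = 0"
  shows "(\<Sum>b\<in>U. if b = c then u b * y else 0) = u c * y"
proof -
  have "(\<Sum>b\<in>U. if b = c then u b * y else 0) = (if c \<in> U then u c * y else 0)"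
    using assms(1) by (simp add: sum.delta)
  then show ?thesis using assms(2) by auto
qed

lemma A_mult_formula:
  fixes u x :: "bidx \<Rightarrow> 'a::field"
  assumes fu: "finite {b. u b \<noteq> 0}" and fx: "finite {b. x b \<noteq> 0}"
  shows "A_mult m w u x e = x Ba * SA m w u e + x Bb * SB m w u e"
proof -
  define U where "U = {b. u b \<noteq> 0}"
  define X where "X = {b. x b \<noteq> 0}"
  have inner: "(\<Sum>b2\<in>X. if bprod m w b1 b2 = Some e then u b1 * x b2 else 0) =
      (if bprod m w b1 Ba = Some e then u b1 * x Ba else 0) + (if bprod m w b1 Bb = Some e then u b1 * x Bb else 0)"
    for b1
    by (rule sum_two) (use fx bprod_other in \<open>auto simp: X_def\<close>)
  have "A_mult m w u x e = (\<Sum>b1\<in>U. (if bprod m w b1 Ba = Some e then u b1 * x Ba else 0) + (if bprod m w b1 Bb = Some e then u b1 * x Bb else 0))"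
    unfolding A_mult_def U_def[symmetric] X_def[symmetric] using inner by simp
  also have "\<dots> = (\<Sum>b1\<in>U. if bprod m w b1 Ba = Some e then u b1 * x Ba else 0) + (\<Sum>b1\<in>U. if bprod m w b1 Bb = Some e then u b1 * x Bb else 0)"
    by (rule sum.distrib)
  also have "(\<Sum>b1\<in>U. if bprod m w b1 Ba = Some e then u b1 * x Ba else 0) = x Ba * SA m w u e"
  proof (cases e)
    case (Bz i j)
    show ?thesis
    proof (cases "1 \<le> j \<and> j \<le> m + w i")
      case True
      have "(\<Sum>b1\<in>U. if bprod m w b1 Ba = Some e then u b1 * x Ba else 0) = (\<Sum>b1\<in>U. if b1 = Bz i (j - 1) then u b1 * x Ba else 0)"
        by (rule sum.cong) (use True Bz in \<open>auto simp: bprod_Ba\<close>)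
      also have "\<dots> = u (Bz i (j - 1)) * x Ba" by (rule sum_one) (use fu U_def in auto)
      finally show ?thesis using True Bz by (simp add: SA_def)
    next
      case False
      then have "\<forall>b1. bprod m w b1 Ba \<noteq> Some e" using Bz by (auto simp: bprod_Ba)
      then show ?thesis using False Bz by (auto simp: SA_def)
    qed
  qed (simp_all add: SA_def bprod_Ba)
  also have "(\<Sum>b1\<in>U. if bprod m w b1 Bb = Some e then u b1 * x Bb else 0) = x Bb * SB m w u e"
  proof (cases e)
    case (Bz i j)
    show ?thesis
    proof (cases "j = 1 \<and> 1 \<le> i")
      case True
      have "(\<Sum>b1\<in>U. if bprod m w b1 Bb = Some e then u b1 * x Bb else 0) = (\<Sum>b1\<in>U. if b1 = Bz (i - 1) (m + w (i - 1)) then u b1 * x Bb else 0)"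
        by (rule sum.cong) (use True Bz in \<open>auto simp: bprod_Bb\<close>)
      also have "\<dots> = u (Bz (i - 1) (m + w (i - 1))) * x Bb" by (rule sum_one) (use fu U_def in auto)
      finally show ?thesis using True Bz by (simp add: SB_def)
    next
      case False
      then have "\<forall>b1. bprod m w b1 Bb \<noteq> Some e" using Bz by (auto simp: bprod_Bb)
      then show ?thesis using False Bz by (auto simp: SB_def)
    qed
  qed (simp_all add: SB_def bprod_Bb)
  finally show ?thesis by simp
qed

lemma A_mult_Ba: "A_mult m w u x Ba = 0" and A_mult_Bb: "A_mult m w u x Bb = 0"
proof -
  have "bprod m w b1 b2 \<noteq> Some Ba" "bprod m w b1 b2 \<noteq> Some Bb" for b1 b2
    by (cases b1; cases b2; auto)+
  then show "A_mult m w u x Ba = 0" "A_mult m w u x Bb = 0" unfolding A_mult_def by simp_all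
qed

lemma A_mult_zero_right:
  assumes "x Ba = 0" "x Bb = 0"
  shows "A_mult m w u x e = 0"
proof -
  have "(if bprod m w b1 b2 = Some e then u b1 * x b2 else 0) = 0" for b1 b2
    using assms bprod_other[of b2 m w b1] by (cases "b2 = Ba \<or> b2 = Bb") auto
  then show ?thesis unfolding A_mult_def by simp
qed

lemma A_mult_fin: "finite {e. A_mult m w u x e \<noteq> 0}"
proof (cases "finite {b. u b \<noteq> 0} \<and> finite {b. x b \<noteq> 0}")
  case True
  then have F: "finite ({b. u b \<noteq> 0} \<times> {b. x b \<noteq> 0})" by simp
  have "{e. A_mult m w u x e \<noteq> 0} \<subseteq> (\<lambda>(b1, b2). the (bprod m w b1 b2)) ` ({b. u b \<noteq> 0} \<times> {b. x b \<noteq> 0})"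
  proof
    fix e assume "e \<in> {e. A_mult m w u x e \<noteq> 0}"
    then have "A_mult m w u x e \<noteq> 0" by simp
    have "\<exists>b1\<in>{b. u b \<noteq> 0}. \<exists>b2\<in>{b. x b \<noteq> 0}. bprod m w b1 b2 = Some e"
    proof (rule ccontr)
      assume N: "\<not> ?thesis"
      have "A_mult m w u x e = 0" unfolding A_mult_def
        by (rule sum.neutral, rule ballI, rule sum.neutral) (use N in auto)
      then show False using \<open>A_mult m w u x e \<noteq> 0\<close> by simp
    qed
    then obtain b1 b2 where "u b1 \<noteq> 0" "x b2 \<noteq> 0" "bprod m w b1 b2 = Some e" by blast
    then show "e \<in> (\<lambda>(b1, b2). the (bprod m w b1 b2)) ` ({b. u b \<noteq> 0} \<times> {b. x b \<noteq> 0})"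
      by (intro image_eqI[of _ _ "(b1, b2)"]) auto
  qed
  then show ?thesis using F finite_subset by blast
next
  case False
  then have "A_mult m w u x e = 0" for e unfolding A_mult_def by auto
  then show ?thesis by simp
qed

fun walk :: "nat \<Rightarrow> (nat \<Rightarrow> nat) \<Rightarrow> nat \<Rightarrow> nat \<Rightarrow> bool list \<Rightarrow> bool" where
  "walk m w i j [] = True"
| "walk m w i j (b # ps) = (if b then j < m + w i \<and> walk m w i (Suc j) ps
                            else j = m + w i \<and> walk m w (Suc i) 1 ps)"

definition zvalid :: "nat \<Rightarrow> (nat \<Rightarrow> nat) \<Rightarrow> nat \<Rightarrow> nat \<Rightarrow> bool" where
  "zvalid m w i j \<longleftrightarrow> 1 \<le> i \<and> 1 \<le> j \<and> j \<le> m + w i"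

definition step :: "nat \<Rightarrow> (nat \<Rightarrow> nat) \<Rightarrow> bool \<Rightarrow> (bidx \<Rightarrow> 'a::field) \<Rightarrow> bidx \<Rightarrow> 'a" where
  "step m w b u = (if b then SA m w u else SB m w u)"

fun WALK :: "nat \<Rightarrow> (nat \<Rightarrow> nat) \<Rightarrow> (bidx \<Rightarrow> 'a::field) \<Rightarrow> bool list \<Rightarrow> bidx \<Rightarrow> 'a" where
  "WALK m w u [] = u"
| "WALK m w u (b # ps) = WALK m w (step m w b u) ps"

lemma WALK_snoc: "WALK m w u (ps @ [b]) = step m w b (WALK m w u ps)"
  by (induct ps arbitrary: u) auto

lemma step_scale: "step m w b (\<lambda>e. c * f e) e = c * step m w b f e"
  by (cases e) (auto simp: step_def SA_def SB_def)

definition valid :: "nat \<Rightarrow> (nat \<Rightarrow> nat) \<Rightarrow> (bidx \<Rightarrow> 'a::field) \<Rightarrow> bool" where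
  "valid m w u \<longleftrightarrow> (\<forall>b. u b \<noteq> 0 \<longrightarrow> valid_idx m w b)"

lemma step_valid:
  assumes "m \<ge> 1" "valid m w u"
  shows "valid m w (step m w b u)"
  unfolding valid_def
proof (intro allI impI)
  fix e assume ne: "step m w b u e \<noteq> 0"
  show "valid_idx m w e"
  proof (cases e)
    case (Bz i j)
    show ?thesis
    proof (cases b)
      case True
      then have "1 \<le> j" "j \<le> m + w i" "u (Bz i (j - 1)) \<noteq> 0" using ne Bz by (auto simp: step_def SA_def split: if_splits)
      then have "1 \<le> i" using assms(2) unfolding valid_def valid_idx_def by fastforce
      then show ?thesis using Bz \<open>1 \<le> j\<close> \<open>j \<le> m + w i\<close> by (simp add: valid_idx_def)
    next
      case False
      then have "j = 1" "1 \<le> i" using ne Bz by (auto simp: step_def SB_def split: if_splits)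
      then show ?thesis using Bz assms(1) by (simp add: valid_idx_def)
    qed
  qed (auto simp: valid_idx_def)
qed

lemma step_pred:
  assumes "valid m w u" "step m w b u (Bz i j) \<noteq> 0"
  shows "\<exists>i' j'. zvalid m w i' j' \<and> u (Bz i' j') \<noteq> 0 \<and> (\<forall>ps. walk m w i' j' (b # ps) = walk m w i j ps)"
proof (cases b)
  case True
  then have h: "1 \<le> j" "j \<le> m + w i" "u (Bz i (j - 1)) \<noteq> 0" using assms(2) by (auto simp: step_def SA_def split: if_splits)
  then have "valid_idx m w (Bz i (j - 1))" using assms(1) unfolding valid_def by blast
  then have "zvalid m w i (j - 1)" unfolding valid_idx_def zvalid_def by simp
  moreover have "\<forall>ps. walk m w i (j - 1) (b # ps) = walk m w i j ps" using True h by auto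
  ultimately show ?thesis using h by blast
next
  case False
  then have h: "j = 1" "1 \<le> i" "u (Bz (i - 1) (m + w (i - 1))) \<noteq> 0" using assms(2) by (auto simp: step_def SB_def split: if_splits)
  then have "valid_idx m w (Bz (i - 1) (m + w (i - 1)))" using assms(1) unfolding valid_def by blast
  then have "zvalid m w (i - 1) (m + w (i - 1))" unfolding valid_idx_def zvalid_def by simp
  moreover have "\<forall>ps. walk m w (i - 1) (m + w (i - 1)) (b # ps) = walk m w i j ps" using False h by auto
  ultimately show ?thesis using h by blast
qed

lemma step_Bz: "step m w b u e \<noteq> 0 \<Longrightarrow> \<exists>i j. e = Bz i j"
  by (cases e; cases b) (auto simp: step_def SA_def SB_def)

lemma WALK_vanish_aux:
  assumes "m \<ge> 1" "valid m w u" "ps \<noteq> []" "WALK m w u ps e \<noteq> 0"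
  shows "\<exists>i j. zvalid m w i j \<and> u (Bz i j) \<noteq> 0 \<and> walk m w i j ps"
  using assms(2-4)
proof (induct ps arbitrary: u)
  case Nil then show ?case by simp
next
  case (Cons b ps)
  have v: "valid m w (step m w b u)" using step_valid[OF assms(1) Cons.prems(1)] .
  show ?case
  proof (cases "ps = []")
    case True
    then have ne: "step m w b u e \<noteq> 0" using Cons.prems by simp
    then obtain i j where e: "e = Bz i j" using step_Bz by blast
    from step_pred[OF Cons.prems(1), of b i j] ne e obtain i' j' where
      "zvalid m w i' j'" "u (Bz i' j') \<noteq> 0" "\<forall>ps. walk m w i' j' (b # ps) = walk m w i j ps" by auto
    then show ?thesis using True by (intro exI[of _ i'] exI[of _ j']) auto
  next
    case False
    then obtain i j where ij: "zvalid m w i j" "step m w b u (Bz i j) \<noteq> 0" "walk m w i j ps"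
      using Cons.hyps[OF v] Cons.prems by auto
    from step_pred[OF Cons.prems(1) ij(2)] obtain i' j' where
      "zvalid m w i' j'" "u (Bz i' j') \<noteq> 0" "\<forall>ps. walk m w i' j' (b # ps) = walk m w i j ps" by auto
    then show ?thesis using ij(3) by (intro exI[of _ i'] exI[of _ j']) auto
  qed
qed

lemma WALK_vanish:
  assumes "m \<ge> 1" "valid m w u" "WALK m w u ps e \<noteq> 0"
  shows "\<exists>i j. zvalid m w i j \<and> walk m w i j ps"
proof (cases "ps = []")
  case True
  have "zvalid m w 1 1" using assms(1) unfolding zvalid_def by simp
  then show ?thesis using True by auto
next
  case False
  then show ?thesis using WALK_vanish_aux[OF assms(1,2) False assms(3)] by blast
qed

fun lnorm :: "mon \<Rightarrow> (nat \<times> nat list) option" where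
  "lnorm (Var v) = Some (v, [])"
| "lnorm (Mul t (Var v)) = map_option (\<lambda>(v1, vs). (v1, vs @ [v])) (lnorm t)"
| "lnorm (Mul t (Mul t1 t2)) = None"

lemma lnorm_leaves: "lnorm t = Some (v1, vs) \<Longrightarrow> leaves t = v1 # vs"
proof (induct t arbitrary: v1 vs rule: lnorm.induct)
  case (2 t v)
  then obtain vs' where "lnorm t = Some (v1, vs')" "vs = vs' @ [v]" by auto
  then show ?case using 2 by simp
qed auto

lemma eval_None: "lnorm t = None \<Longrightarrow> eval_mon m w t s = (\<lambda>e. 0)"
proof (induct t rule: lnorm.induct)
  case (2 t v)
  then have "eval_mon m w t s = (\<lambda>e. 0)" by simp
  then show ?case by (simp add: A_mult_def fun_eq_iff)
next
  case (3 t t1 t2)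
  show ?case by (simp add: fun_eq_iff A_mult_zero_right A_mult_Ba A_mult_Bb)
qed auto

lemma eval_fin:
  assumes "\<forall>v\<in>set (leaves t). finite {b. s v b \<noteq> 0}"
  shows "finite {b. eval_mon m w t s b \<noteq> 0}"
  using assms by (cases t) (auto simp: A_mult_fin)

definition cf :: "(nat \<Rightarrow> bidx \<Rightarrow> 'a::field) \<Rightarrow> nat \<Rightarrow> nat \<Rightarrow> 'a" where
  "cf s k v = (if v < k then s v Ba else s v Bb)"

lemma eval_formula:
  assumes gs: "graded_subst m w k n s"
  shows "lnorm t = Some (v1, vs) \<Longrightarrow> set (v1 # vs) \<subseteq> {..<n} \<Longrightarrow>
    eval_mon m w t s = (\<lambda>e. prod_list (map (cf s k) vs) * WALK m w (s v1) (map (\<lambda>v. v < k) vs) e)"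
proof (induct t arbitrary: v1 vs rule: lnorm.induct)
  case (1 v)
  then show ?case by (simp add: fun_eq_iff)
next
  case (2 t v)
  then obtain vs' where t: "lnorm t = Some (v1, vs')" and vs: "vs = vs' @ [v]" by auto
  have vn: "v < n" "set (v1 # vs') \<subseteq> {..<n}" using 2(3) vs by auto
  have ih: "eval_mon m w t s = (\<lambda>e. prod_list (map (cf s k) vs') * WALK m w (s v1) (map (\<lambda>v. v < k) vs') e)"
    using 2(1)[OF t vn(2)] .
  have sfin: "finite {b. s v' b \<noteq> 0}" if "v' < n" for v'
    using gs that unfolding graded_subst_def A_even_def A_odd_def A_elem_def by (cases "v' < k") auto
  have fin1: "finite {b. eval_mon m w t s b \<noteq> 0}"
    by (rule eval_fin) (use lnorm_leaves[OF t] vn sfin in auto)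
  have fin2: "finite {b. s v b \<noteq> 0}" using sfin vn by simp
  define P where "P = prod_list (map (cf s k) vs')"
  define W where "W = WALK m w (s v1) (map (\<lambda>v. v < k) vs')"
  show ?case
  proof (rule ext)
    fix e
    have "eval_mon m w (Mul t (Var v)) s e = s v Ba * SA m w (eval_mon m w t s) e + s v Bb * SB m w (eval_mon m w t s) e"
      using A_mult_formula[OF fin1 fin2] by simp
    also have "\<dots> = prod_list (map (cf s k) vs) * WALK m w (s v1) (map (\<lambda>v. v < k) vs) e"
    proof (cases "v < k")
      case True
      then have "A_even m w (s v)" using gs vn unfolding graded_subst_def by auto
      then have "s v Bb = 0" unfolding A_even_def by auto
      moreover have "SA m w (eval_mon m w t s) e = P * SA m w W e"
        unfolding ih P_def[symmetric] W_def[symmetric] using step_scale[of m w True P W e] by (simp add: step_def)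
      ultimately show ?thesis using True unfolding vs P_def W_def
        by (simp add: WALK_snoc step_def cf_def algebra_simps)
    next
      case False
      then have "A_odd m w (s v)" using gs vn unfolding graded_subst_def by auto
      then have "s v Ba = 0" unfolding A_odd_def by auto
      moreover have "SB m w (eval_mon m w t s) e = P * SB m w W e"
        unfolding ih P_def[symmetric] W_def[symmetric] using step_scale[of m w False P W e] by (simp add: step_def)
      ultimately show ?thesis using False unfolding vs P_def W_def
        by (simp add: WALK_snoc step_def cf_def algebra_simps)
    qed
    finally show "eval_mon m w (Mul t (Var v)) s e = prod_list (map (cf s k) vs) * WALK m w (s v1) (map (\<lambda>v. v < k) vs) e" .
  qed
next
  case (3 t t1 t2)
  then show ?case by simp
qed


lemma leaves_ne: "leaves t \<noteq> []"
  by (induct t) auto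

lemma finite_trees: "finite {t. length (leaves t) \<le> N \<and> set (leaves t) \<subseteq> A}" if "finite A" for A
proof (induct N)
  case 0 then show ?case using leaves_ne by simp
next
  case (Suc N)
  let ?T = "{t. length (leaves t) \<le> N \<and> set (leaves t) \<subseteq> A}"
  have "{t. length (leaves t) \<le> Suc N \<and> set (leaves t) \<subseteq> A} \<subseteq> Var ` A \<union> (\<lambda>(x, y). Mul x y) ` (?T \<times> ?T)"
  proof
    fix t assume t: "t \<in> {t. length (leaves t) \<le> Suc N \<and> set (leaves t) \<subseteq> A}"
    show "t \<in> Var ` A \<union> (\<lambda>(x, y). Mul x y) ` (?T \<times> ?T)"
    proof (cases t)
      case (Var v) then show ?thesis using t by auto
    next
      case (Mul x y)
      have "leaves x \<noteq> []" "leaves y \<noteq> []" using leaves_ne by auto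
      then have "length (leaves x) \<ge> 1" "length (leaves y) \<ge> 1" by (auto simp: Suc_le_eq)
      then have "x \<in> ?T" "y \<in> ?T" using t Mul by auto
      then show ?thesis using Mul by (auto intro!: image_eqI[of _ _ "(x, y)"])
    qed
  qed
  moreover have "finite (Var ` A \<union> (\<lambda>(x, y). Mul x y) ` (?T \<times> ?T))" using Suc that by simp
  ultimately show ?case using finite_subset by blast
qed

lemma finite_mons: "finite (multilin_mons n)"
proof -
  have "multilin_mons n \<subseteq> {t. length (leaves t) \<le> n \<and> set (leaves t) \<subseteq> {..<n}}"
    unfolding multilin_mons_def using distinct_card by fastforce
  then show ?thesis using finite_trees[of "{..<n}" n] finite_subset by blast
qed

definition LN :: "nat \<Rightarrow> mon set" where
  "LN n = {t \<in> multilin_mons n. lnorm t \<noteq> None}"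

definition key :: "nat \<Rightarrow> mon \<Rightarrow> nat \<times> bool list" where
  "key k t = (case lnorm t of Some (v1, vs) \<Rightarrow> (v1, map (\<lambda>v. v < k) vs) | None \<Rightarrow> (0, []))"

definition RP :: "nat \<Rightarrow> (nat \<Rightarrow> nat) \<Rightarrow> nat \<Rightarrow> bool list set" where
  "RP m w L = {pat. length pat = L \<and> (\<exists>i j. zvalid m w i j \<and> walk m w i j pat)}"

definition Kset :: "nat \<Rightarrow> (nat \<Rightarrow> nat) \<Rightarrow> nat \<Rightarrow> nat \<Rightarrow> (nat \<times> bool list) set" where
  "Kset m w k n = {\<kappa> \<in> key k ` LN n. snd \<kappa> \<in> RP m w (n - 1)}"

definition Lmap :: "nat \<Rightarrow> (nat \<Rightarrow> nat) \<Rightarrow> nat \<Rightarrow> nat \<Rightarrow> (mon \<Rightarrow> 'a::field) \<Rightarrow> nat \<times> bool list \<Rightarrow> 'a" where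
  "Lmap m w k n p \<kappa> = (if \<kappa> \<in> Kset m w k n then (\<Sum>t\<in>{t \<in> LN n. key k t = \<kappa>}. p t) else 0)"

lemma finite_LN: "finite (LN n)" unfolding LN_def using finite_mons by simp

lemma finite_Kset: "finite (Kset m w k n)" unfolding Kset_def using finite_LN by simp

lemma LN_data:
  assumes "t \<in> LN n"
  shows "\<exists>v1 vs. lnorm t = Some (v1, vs) \<and> leaves t = v1 # vs \<and> distinct (v1 # vs) \<and> set (v1 # vs) = {..<n}
    \<and> key k t = (v1, map (\<lambda>v. v < k) vs)"
proof -
  obtain v1 vs where l: "lnorm t = Some (v1, vs)" using assms unfolding LN_def by auto
  then have "leaves t = v1 # vs" by (rule lnorm_leaves)
  then show ?thesis using l assms unfolding LN_def multilin_mons_def key_def by auto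
qed

lemma identity_of_Lmap:
  fixes p :: "mon \<Rightarrow> 'a::field"
  assumes m1: "m \<ge> 1" and L0: "\<And>\<kappa>. Lmap m w k n p \<kappa> = 0"
  shows "graded_identity m w k n p"
  unfolding graded_identity_def
proof (intro allI impI)
  fix s :: "nat \<Rightarrow> bidx \<Rightarrow> 'a" and e assume gs: "graded_subst m w k n s"
  define G where "G \<kappa> = (\<Prod>v\<in>{..<n} - {fst \<kappa>}. cf s k v) * WALK m w (s (fst \<kappa>)) (snd \<kappa>) e" for \<kappa>
  have evalG: "eval_mon m w t s e = G (key k t)" if tLN: "t \<in> LN n" for t
  proof -
    obtain v1 vs where d: "lnorm t = Some (v1, vs)" "leaves t = v1 # vs" "distinct (v1 # vs)" "set (v1 # vs) = {..<n}"
      "key k t = (v1, map (\<lambda>v. v < k) vs)" using LN_data[OF tLN] by blast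
    have "eval_mon m w t s e = prod_list (map (cf s k) vs) * WALK m w (s v1) (map (\<lambda>v. v < k) vs) e"
    proof -
      have "set (v1 # vs) \<subseteq> {..<n}" using d(4) by simp
      from eval_formula[OF gs d(1) this] show ?thesis by simp
    qed
    moreover have "prod_list (map (cf s k) vs) = (\<Prod>v\<in>set vs. cf s k v)"
      using d(3) by (simp add: prod.distinct_set_conv_list)
    moreover have "set vs = {..<n} - {v1}" using d(3,4) by auto
    ultimately show ?thesis unfolding G_def d(5) by simp
  qed
  have "eval_poly m w n p s e = (\<Sum>t\<in>LN n. p t * eval_mon m w t s e)"
    unfolding eval_poly_def
  proof (rule sum.mono_neutral_right)
    show "finite (multilin_mons n)" by (rule finite_mons)
    show "LN n \<subseteq> multilin_mons n" unfolding LN_def by auto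
    show "\<forall>i\<in>multilin_mons n - LN n. p i * eval_mon m w i s e = 0"
    proof
      fix i assume "i \<in> multilin_mons n - LN n"
      then have "\<not> (lnorm i \<noteq> None)" unfolding LN_def by blast
      then have "lnorm i = None" by blast
      then have "eval_mon m w i s = (\<lambda>e. 0)" by (rule eval_None)
      then show "p i * eval_mon m w i s e = 0" by simp
    qed
  qed
  also have "\<dots> = (\<Sum>t\<in>LN n. p t * G (key k t))" using evalG by simp
  also have "\<dots> = (\<Sum>\<kappa>\<in>key k ` LN n. \<Sum>t\<in>{t \<in> LN n. key k t = \<kappa>}. p t * G (key k t))"
    by (rule sum.image_gen[OF finite_LN])
  also have "\<dots> = (\<Sum>\<kappa>\<in>key k ` LN n. (\<Sum>t\<in>{t \<in> LN n. key k t = \<kappa>}. p t) * G \<kappa>)"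
    by (simp add: sum_distrib_right)
  also have "\<dots> = 0"
  proof (rule sum.neutral, rule ballI)
    fix \<kappa> assume k: "\<kappa> \<in> key k ` LN n"
    show "(\<Sum>t\<in>{t \<in> LN n. key k t = \<kappa>}. p t) * G \<kappa> = 0"
    proof (cases "\<kappa> \<in> Kset m w k n")
      case True
      then show ?thesis using L0[of \<kappa>] unfolding Lmap_def by simp
    next
      case False
      then have nr: "snd \<kappa> \<notin> RP m w (n - 1)" using k unfolding Kset_def by auto
      obtain t where t: "t \<in> LN n" "\<kappa> = key k t" using k by auto
      obtain v1 vs where d: "lnorm t = Some (v1, vs)" "leaves t = v1 # vs" "distinct (v1 # vs)" "set (v1 # vs) = {..<n}"
        "key k t = (v1, map (\<lambda>v. v < k) vs)" using LN_data[OF t(1)] by blast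
      have "length vs = n - 1" using d(3,4) distinct_card by fastforce
      then have len: "length (snd \<kappa>) = n - 1" using t d by simp
      have "v1 < n" using d(4) by auto
      then have "A_elem m w (s v1)" using gs unfolding graded_subst_def A_even_def A_odd_def by (cases "v1 < k") auto
      then have val: "valid m w (s v1)" unfolding A_elem_def valid_def by auto
      have "WALK m w (s (fst \<kappa>)) (snd \<kappa>) e = 0"
      proof (rule ccontr)
        assume ne: "WALK m w (s (fst \<kappa>)) (snd \<kappa>) e \<noteq> 0"
        have "fst \<kappa> = v1" using t d by simp
        then have "WALK m w (s v1) (snd \<kappa>) e \<noteq> 0" using ne by simp
        then have "\<exists>i j. zvalid m w i j \<and> walk m w i j (snd \<kappa>)"
          by (rule WALK_vanish[OF m1 val])
        then show False using nr len unfolding RP_def by auto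
      qed
      then show ?thesis unfolding G_def by simp
    qed
  qed
  finally show "eval_poly m w n p s e = 0" .
qed

lemma sum_fun_apply: "(\<Sum>a\<in>A. f a) x = (\<Sum>a\<in>A. f a x)"
  by (induct A rule: infinite_finite_induct) auto

lemma Lmap_lin:
  "Lmap m w k n (\<lambda>t. \<Sum>l<r. c l * f l t) \<kappa> = (\<Sum>l<r. c l * Lmap m w k n (f l) \<kappa>)"
  unfolding Lmap_def by (auto simp: sum_distrib_left intro: sum.swap)

lemma cgr_kl_le:
  assumes m1: "m \<ge> 1"
  shows "cgr_kl (F :: 'a::field itself) m w k n \<le> card (Kset m w k n)"
proof -
  define S where "S = {r. \<exists>f :: nat \<Rightarrow> mon \<Rightarrow> 'a.
      (\<forall>i<r. f i \<in> multilin_polys n) \<and>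
      (\<forall>c :: nat \<Rightarrow> 'a. graded_identity m w k n (\<lambda>t. \<Sum>i<r. c i * f i t) \<longrightarrow> (\<forall>i<r. c i = 0))}"
  define sc where "sc = (\<lambda>(c::'a) (g :: nat \<times> bool list \<Rightarrow> 'a) x. c * g x)"
  interpret VS: vector_space sc
    by unfold_locales (auto simp: sc_def fun_eq_iff algebra_simps)
  have bound: "r \<le> card (Kset m w k n)" if "r \<in> S" for r
  proof -
    from that obtain f :: "nat \<Rightarrow> mon \<Rightarrow> 'a" where
      indep: "\<forall>c :: nat \<Rightarrow> 'a. graded_identity m w k n (\<lambda>t. \<Sum>i<r. c i * f i t) \<longrightarrow> (\<forall>i<r. c i = 0)"
      unfolding S_def by blast
    define V where "V i = Lmap m w k n (f i)" for i
    have key: "\<forall>i<r. c i = 0" if "(\<Sum>l<r. sc (c l) (V l)) = 0" for c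
    proof -
      have "Lmap m w k n (\<lambda>t. \<Sum>l<r. c l * f l t) \<kappa> = 0" for \<kappa>
        using fun_cong[OF that, of \<kappa>] unfolding Lmap_lin V_def sc_def by (simp add: sum_fun_apply)
      then have "graded_identity m w k n (\<lambda>t. \<Sum>l<r. c l * f l t)" by (rule identity_of_Lmap[OF m1])
      then show ?thesis using indep by blast
    qed
    have inj: "inj_on V {..<r}"
    proof (rule inj_onI)
      fix i j assume ij: "i \<in> {..<r}" "j \<in> {..<r}" "V i = V j"
      show "i = j"
      proof (rule ccontr)
        assume ne: "i \<noteq> j"
        define c :: "nat \<Rightarrow> 'a" where "c l = (if l = i then 1 else if l = j then -1 else 0)" for l
        have "(\<Sum>l<r. sc (c l) (V l)) = (\<Sum>l\<in>{i, j}. sc (c l) (V l))"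
          by (rule sum.mono_neutral_right) (use ij in \<open>auto simp: c_def sc_def fun_eq_iff\<close>)
        also have "\<dots> = 0" using ne ij(3) by (simp add: c_def sc_def fun_eq_iff)
        finally have "\<forall>l<r. c l = 0" by (rule key)
        then show False using ij unfolding c_def by auto
      qed
    qed
    have indepV: "\<not> VS.dependent (V ` {..<r})"
    proof
      assume "VS.dependent (V ` {..<r})"
      then obtain T u where T: "finite T" "T \<subseteq> V ` {..<r}" "(\<Sum>v\<in>T. sc (u v) v) = 0" "\<exists>v\<in>T. u v \<noteq> 0"
        unfolding VS.dependent_explicit by blast
      define c where "c l = (if V l \<in> T then u (V l) else 0)" for l
      define I where "I = {l \<in> {..<r}. V l \<in> T}"
      have TI: "T = V ` I" unfolding I_def using T(2) by auto
      have injI: "inj_on V I" using inj unfolding I_def by (rule inj_on_subset) auto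
      have "(\<Sum>l<r. sc (c l) (V l)) = (\<Sum>l\<in>I. sc (c l) (V l))"
        by (rule sum.mono_neutral_right) (auto simp: I_def c_def sc_def fun_eq_iff)
      also have "\<dots> = (\<Sum>l\<in>I. sc (u (V l)) (V l))" by (rule sum.cong) (auto simp: I_def c_def)
      also have "\<dots> = (\<Sum>v\<in>T. sc (u v) v)" unfolding TI by (simp add: sum.reindex[OF injI])
      also have "\<dots> = 0" by (rule T(3))
      finally have "\<forall>l<r. c l = 0" by (rule key)
      moreover obtain v where "v \<in> T" "u v \<noteq> 0" using T(4) by blast
      moreover obtain l where "l < r" "v = V l" using \<open>v \<in> T\<close> T(2) by auto
      ultimately show False unfolding c_def by auto
    qed
    define \<delta> where "\<delta> (\<kappa>::nat \<times> bool list) = (\<lambda>x. if x = \<kappa> then (1::'a) else 0)" for \<kappa>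
    have span: "V ` {..<r} \<subseteq> VS.span (\<delta> ` Kset m w k n)"
    proof
      fix v assume "v \<in> V ` {..<r}"
      then obtain i where v: "v = V i" by auto
      have "v = (\<Sum>\<kappa>\<in>Kset m w k n. sc (v \<kappa>) (\<delta> \<kappa>))"
      proof (rule ext)
        fix x
        have "(\<Sum>\<kappa>\<in>Kset m w k n. sc (v \<kappa>) (\<delta> \<kappa>)) x = (\<Sum>\<kappa>\<in>Kset m w k n. if x = \<kappa> then v \<kappa> else 0)"
          unfolding sum_fun_apply sc_def \<delta>_def by (rule sum.cong) auto
        also have "\<dots> = (if x \<in> Kset m w k n then v x else 0)" using finite_Kset by (simp add: sum.delta)
        also have "\<dots> = v x" unfolding v V_def Lmap_def by simp
        finally show "v x = (\<Sum>\<kappa>\<in>Kset m w k n. sc (v \<kappa>) (\<delta> \<kappa>)) x" by simp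
      qed
      also have "\<dots> \<in> VS.span (\<delta> ` Kset m w k n)"
        by (intro VS.span_sum VS.span_scale VS.span_base) auto
      finally show "v \<in> VS.span (\<delta> ` Kset m w k n)" .
    qed
    have "card (V ` {..<r}) \<le> card (\<delta> ` Kset m w k n)"
      using VS.independent_span_bound[OF _ indepV span] finite_Kset by auto
    also have "\<dots> \<le> card (Kset m w k n)" by (rule card_image_le[OF finite_Kset])
    finally show ?thesis using card_image[OF inj] by simp
  qed
  have "0 \<in> S" unfolding S_def by auto
  moreover have "finite S" using bound finite_nat_set_iff_bounded_le by blast
  ultimately have "Max S \<le> card (Kset m w k n)" using bound by (intro Max.boundedI) auto
  then show ?thesis unfolding cgr_kl_def S_def by simp
qed


fun dpl :: "nat \<Rightarrow> nat \<Rightarrow> nat list \<Rightarrow> nat \<Rightarrow> bool list" where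
  "dpl m j u 0 = []"
| "dpl m j u (Suc L) = (if j < m + hd u then True # dpl m (Suc j) u L else False # dpl m 1 (tl u) L)"

lemma walk_dpl:
  assumes m1: "m \<ge> 1"
  shows "walk m w i j pat \<Longrightarrow> j \<le> m + w i \<Longrightarrow> N \<ge> length pat + 1 \<Longrightarrow> pat = dpl m j (fac w i N) (length pat)"
proof (induct pat arbitrary: i j N)
  case Nil then show ?case by simp
next
  case (Cons b ps)
  obtain N' where N: "N = Suc N'" using Cons.prems(3) by (cases N) auto
  have u: "fac w i N = w i # fac w (Suc i) N'" unfolding N by (rule fac_Suc_left)
  show ?case
  proof (cases b)
    case True
    then have h: "j < m + w i" "walk m w i (Suc j) ps" using Cons.prems by auto
    have "ps = dpl m (Suc j) (fac w i N) (length ps)" using Cons.hyps[OF h(2)] h(1) Cons.prems(3) by simp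
    then show ?thesis using True h(1) u by simp
  next
    case False
    then have h: "j = m + w i" "walk m w (Suc i) 1 ps" using Cons.prems by auto
    have "ps = dpl m 1 (fac w (Suc i) N') (length ps)" using Cons.hyps[OF h(2)] Cons.prems(3) N m1 by simp
    then show ?thesis using False h(1) u by simp
  qed
qed

lemma card_RP:
  assumes bin: "binary_word w" and m1: "m \<ge> 1"
  shows "card (RP m w L) \<le> (m + 1) * card (factors w (L + 1))"
proof -
  have sub: "RP m w L \<subseteq> (\<lambda>(j, u). dpl m j u L) ` ({1..m+1} \<times> factors w (L + 1))"
  proof
    fix pat assume "pat \<in> RP m w L"
    then obtain i j where ij: "length pat = L" "zvalid m w i j" "walk m w i j pat" unfolding RP_def by auto
    have z: "1 \<le> i" "1 \<le> j" "j \<le> m + w i" using ij(2) unfolding zvalid_def by auto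
    have "w i \<le> 1" using bin z(1) unfolding binary_word_def by fastforce
    then have jm: "j \<in> {1..m+1}" using z by auto
    have "pat = dpl m j (fac w i (L + 1)) L" using walk_dpl[OF m1 ij(3) z(3)] ij(1) by simp
    moreover have "fac w i (L + 1) \<in> factors w (L + 1)" using fac_in z(1) by blast
    ultimately show "pat \<in> (\<lambda>(j, u). dpl m j u L) ` ({1..m+1} \<times> factors w (L + 1))"
      using jm by (intro image_eqI[of _ _ "(j, fac w i (L + 1))"]) auto
  qed
  have "card (RP m w L) \<le> card ((\<lambda>(j, u). dpl m j u L) ` ({1..m+1} \<times> factors w (L + 1)))"
    by (rule card_mono) (use sub finite_factors[OF bin] in auto)
  also have "\<dots> \<le> card ({1..m+1} \<times> factors w (L + 1))" by (rule card_image_le) (use finite_factors[OF bin] in auto)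
  also have "\<dots> = (m + 1) * card (factors w (L + 1))" by (simp add: card_cartesian_product)
  finally show ?thesis .
qed

lemma finite_RP:
  assumes bin: "binary_word w" shows "finite (RP m w L)"
proof -
  have "RP m w L \<subseteq> {xs. set xs \<subseteq> {True, False} \<and> length xs = L}" unfolding RP_def by auto
  moreover have "finite {xs. set xs \<subseteq> {True, False} \<and> length xs = L}" by (rule finite_lists_length_eq) simp
  ultimately show ?thesis using finite_subset by blast
qed

definition qc :: "bool list \<Rightarrow> nat" where "qc pat = length (filter Not pat)"

definition SK :: "nat \<Rightarrow> (nat \<Rightarrow> nat) \<Rightarrow> nat \<Rightarrow> nat \<Rightarrow> bool list set" where
  "SK m w k n = {pat \<in> RP m w (n - 1). qc pat = n - k \<or> qc pat + 1 = n - k}"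

lemma card_Kset:
  assumes bin: "binary_word w" and kn: "k \<le> n"
  shows "card (Kset m w k n) \<le> n * card (SK m w k n)"
proof -
  have sub: "Kset m w k n \<subseteq> {..<n} \<times> SK m w k n"
  proof
    fix \<kappa> assume k: "\<kappa> \<in> Kset m w k n"
    then obtain t where t: "t \<in> LN n" "\<kappa> = key k t" "snd \<kappa> \<in> RP m w (n - 1)" unfolding Kset_def by auto
    obtain v1 vs where d: "lnorm t = Some (v1, vs)" "leaves t = v1 # vs" "distinct (v1 # vs)" "set (v1 # vs) = {..<n}"
      "key k t = (v1, map (\<lambda>v. v < k) vs)" using LN_data[OF t(1)] by blast
    have v1: "v1 < n" using d(4) by auto
    have sv: "set vs = {..<n} - {v1}" using d(3,4) by auto
    have "qc (map (\<lambda>v. v < k) vs) = length (filter (\<lambda>v. \<not> v < k) vs)"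
      unfolding qc_def by (simp add: filter_map o_def)
    also have "\<dots> = card ({v. \<not> v < k} \<inter> set vs)" using d(3) by (simp add: distinct_length_filter)
    also have "{v. \<not> v < k} \<inter> set vs = {k..<n} - {v1}" unfolding sv by auto
    finally have q: "qc (map (\<lambda>v. v < k) vs) = card ({k..<n} - {v1})" .
    have "qc (map (\<lambda>v. v < k) vs) = n - k \<or> qc (map (\<lambda>v. v < k) vs) + 1 = n - k"
    proof (cases "k \<le> v1")
      case True
      then have "card ({k..<n} - {v1}) = n - k - 1" using v1 by simp
      then show ?thesis using q True v1 by arith
    next
      case False
      then have "{k..<n} - {v1} = {k..<n}" by auto
      then show ?thesis using q by simp
    qed
    then show "\<kappa> \<in> {..<n} \<times> SK m w k n" using t d v1 unfolding SK_def by auto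
  qed
  have fin: "finite (SK m w k n)" unfolding SK_def using finite_RP[OF bin] by simp
  have "card (Kset m w k n) \<le> card ({..<n} \<times> SK m w k n)" by (rule card_mono) (use fin sub in auto)
  also have "\<dots> = n * card (SK m w k n)" by (simp add: card_cartesian_product)
  finally show ?thesis .
qed

lemma bcount_aux:
  assumes m1: "m \<ge> 1"
  shows "walk m w i j pat \<Longrightarrow> j \<le> m + w i \<Longrightarrow> qc pat \<ge> 1 \<Longrightarrow>
     (m + w i - j) + 1 + (qc pat - 1) * m + Wn w (Suc i) (qc pat - 1) \<le> length pat"
proof (induct pat arbitrary: i j)
  case Nil then show ?case by (simp add: qc_def)
next
  case (Cons b ps)
  show ?case
  proof (cases b)
    case True
    then have h: "j < m + w i" "walk m w i (Suc j) ps" using Cons.prems by auto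
    have q: "qc (b # ps) = qc ps" using True by (simp add: qc_def)
    have "(m + w i - Suc j) + 1 + (qc ps - 1) * m + Wn w (Suc i) (qc ps - 1) \<le> length ps"
      using Cons.hyps[OF h(2)] h(1) Cons.prems(3) q by simp
    then show ?thesis using q h(1) by simp
  next
    case False
    then have h: "j = m + w i" "walk m w (Suc i) 1 ps" using Cons.prems by auto
    have q: "qc (b # ps) = qc ps + 1" using False by (simp add: qc_def)
    show ?thesis
    proof (cases "qc ps = 0")
      case True then show ?thesis using q h by simp
    next
      case False
      then have ih: "(m + w (Suc i) - 1) + 1 + (qc ps - 1) * m + Wn w (Suc (Suc i)) (qc ps - 1) \<le> length ps"
        using Cons.hyps[OF h(2)] m1 by simp
      have "Wn w (Suc i) (qc ps) = w (Suc i) + Wn w (Suc (Suc i)) (qc ps - 1)"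
        using Wn_Suc_left[of w "Suc i" "qc ps - 1"] False by simp
      moreover have "qc ps * m = m + (qc ps - 1) * m" using False by (cases "qc ps") auto
      ultimately show ?thesis using q h ih m1 by simp
    qed
  qed
qed

lemma bcount:
  assumes m1: "m \<ge> 1" and pat: "pat \<in> RP m w L" and q1: "qc pat \<ge> 1"
  shows "\<exists>i\<ge>1. 1 + (qc pat - 1) * m + Wn w (Suc i) (qc pat - 1) \<le> L"
proof -
  obtain i j where ij: "length pat = L" "zvalid m w i j" "walk m w i j pat" using pat unfolding RP_def by auto
  have "j \<le> m + w i" "i \<ge> 1" using ij(2) unfolding zvalid_def by auto
  then show ?thesis using bcount_aux[OF m1 ij(3) _ q1] ij(1) by fastforce
qed


lemma binom_term_le:
  fixes x :: real
  assumes "0 \<le> x" "x \<le> 1" "q \<le> n"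
  shows "real (n choose q) * x ^ q * (1 - x) ^ (n - q) \<le> 1"
proof -
  have "(x + (1 - x)) ^ n = (\<Sum>k\<le>n. real (n choose k) * x ^ k * (1 - x) ^ (n - k))"
    by (rule binomial_ring)
  then have eq: "(\<Sum>k\<le>n. real (n choose k) * x ^ k * (1 - x) ^ (n - k)) = 1" by simp
  have "real (n choose q) * x ^ q * (1 - x) ^ (n - q) \<le> (\<Sum>k\<le>n. real (n choose k) * x ^ k * (1 - x) ^ (n - k))"
    by (rule member_le_sum) (use assms in auto)
  then show ?thesis using eq by simp
qed

lemma Phi_pow:
  fixes x :: real
  assumes "0 < x" "x < 1"
  shows "Phi x ^ n = exp (- (real n * (x * ln x + (1 - x) * ln (1 - x))))"
proof -
  have "Phi x = exp (- (x * ln x + (1 - x) * ln (1 - x)))"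
    unfolding Phi_def using assms by (simp add: powr_def exp_add[symmetric] algebra_simps)
  then have "Phi x ^ n = exp (real n * (- (x * ln x + (1 - x) * ln (1 - x))))"
    by (simp add: exp_of_nat_mult)
  then show ?thesis by (simp add: algebra_simps)
qed

lemma binom_Phi:
  fixes x :: real
  assumes x: "0 < x" "x \<le> 1/2" and q: "real q \<le> x * real n"
  shows "real (n choose q) \<le> Phi x ^ n"
proof -
  have x1: "x < 1" using x by simp
  have qn: "q \<le> n"
  proof -
    have "x * real n \<le> 1 * real n" using x by (intro mult_right_mono) auto
    then have "real q \<le> real n" using q by simp
    then show ?thesis by simp
  qed
  have pos: "x ^ q * (1 - x) ^ (n - q) > 0" using x1 x by simp
  have B: "real (n choose q) \<le> 1 / (x ^ q * (1 - x) ^ (n - q))"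
    using binom_term_le[of x q n] x x1 qn pos by (simp add: field_simps)
  have E: "x ^ q * (1 - x) ^ (n - q) = exp (real q * ln x + real (n - q) * ln (1 - x))"
    using x x1 by (simp add: exp_add ln_realpow[symmetric])
  have lnle: "ln x \<le> ln (1 - x)" using x by simp
  have "real q * ln x + real (n - q) * ln (1 - x) = real n * ln (1 - x) + real q * (ln x - ln (1 - x))"
    using qn by (simp add: of_nat_diff algebra_simps)
  also have "\<dots> \<ge> real n * ln (1 - x) + x * real n * (ln x - ln (1 - x))"
    using q lnle by (intro add_left_mono mult_right_mono_neg) auto
  finally have ge: "real q * ln x + real (n - q) * ln (1 - x) \<ge> real n * (x * ln x + (1 - x) * ln (1 - x))"
    by (simp add: algebra_simps)
  have "1 / (x ^ q * (1 - x) ^ (n - q)) = exp (- (real q * ln x + real (n - q) * ln (1 - x)))"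
    unfolding E using exp_minus[of "real q * ln x + real (n - q) * ln (1 - x)"] by (simp add: inverse_eq_divide)
  also have "\<dots> \<le> exp (- (real n * (x * ln x + (1 - x) * ln (1 - x))))" using ge by simp
  also have "\<dots> = Phi x ^ n" using Phi_pow[OF x(1) x1] by simp
  finally show ?thesis using B by simp
qed


lemma sum_SK:
  assumes bin: "binary_word w"
  shows "(\<Sum>k=0..n. card (SK m w k n)) \<le> 2 * card (RP m w (n - 1))"
proof -
  define R where "R = RP m w (n - 1)"
  have finR: "finite R" unfolding R_def by (rule finite_RP[OF bin])
  have c: "card (SK m w k n) = (\<Sum>p\<in>R. if p \<in> SK m w k n then 1 else 0)" for k
  proof -
    have "(\<Sum>p\<in>R. if p \<in> SK m w k n then 1 else 0) = card (R \<inter> SK m w k n)"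
      using finR by (simp add: sum.If_cases)
    also have "R \<inter> SK m w k n = SK m w k n" unfolding R_def SK_def by auto
    finally show ?thesis by simp
  qed
  have "(\<Sum>k=0..n. card (SK m w k n)) = (\<Sum>k=0..n. \<Sum>p\<in>R. if p \<in> SK m w k n then 1 else 0)"
    using c by simp
  also have "\<dots> = (\<Sum>p\<in>R. \<Sum>k=0..n. if p \<in> SK m w k n then 1 else 0)" by (rule sum.swap)
  also have "\<dots> \<le> (\<Sum>p\<in>R. 2)"
  proof (rule sum_mono)
    fix p assume "p \<in> R"
    have "(\<Sum>k=0..n. if p \<in> SK m w k n then 1 else 0) = card ({0..n} \<inter> {k. p \<in> SK m w k n})"
      by (simp add: sum.If_cases)
    also have "\<dots> \<le> card {n - qc p, n - (qc p + 1)}"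
      by (rule card_mono) (auto simp: SK_def)
    also have "\<dots> \<le> 2" by (rule card_insert_le_m1) auto
    finally show "(\<Sum>k=0..n. if p \<in> SK m w k n then 1 else 0) \<le> (2::nat)" .
  qed
  also have "\<dots> = 2 * card R" by simp
  finally show ?thesis unfolding R_def .
qed

lemma cgr_bound:
  assumes m1: "m \<ge> 1" and bin: "binary_word w" and B: "B \<ge> 0"
    and hyp: "\<And>k. k \<le> n \<Longrightarrow> SK m w k n \<noteq> {} \<Longrightarrow> real (n choose k) \<le> B"
  shows "real (cgr (F :: 'a::field itself) m w n) \<le> 2 * B * real n * real (card (RP m w (n - 1)))"
proof -
  have "real (cgr F m w n) = (\<Sum>k=0..n. real (n choose k) * real (cgr_kl F m w k n))"
    unfolding cgr_def by simp
  also have "\<dots> \<le> (\<Sum>k=0..n. B * (real n * real (card (SK m w k n))))"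
  proof (rule sum_mono)
    fix k assume k: "k \<in> {0..n}"
    have A: "cgr_kl F m w k n \<le> card (Kset m w k n)" by (rule cgr_kl_le[OF m1])
    have B: "card (Kset m w k n) \<le> n * card (SK m w k n)" by (rule card_Kset[OF bin]) (use k in simp)
    have "cgr_kl F m w k n \<le> n * card (SK m w k n)" using A B by (rule order_trans)
    then have c: "real (cgr_kl F m w k n) \<le> real n * real (card (SK m w k n))"
      by (metis of_nat_le_iff of_nat_mult)
    show "real (n choose k) * real (cgr_kl F m w k n) \<le> B * (real n * real (card (SK m w k n)))"
    proof (cases "SK m w k n = {}")
      case True
      then show ?thesis using c by simp
    next
      case False
      then have "real (n choose k) \<le> B" using hyp k by simp
      then show ?thesis using c by (intro mult_mono) auto
    qed
  qed
  also have "\<dots> = B * real n * real (\<Sum>k=0..n. card (SK m w k n))"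
    by (simp add: sum_distrib_left algebra_simps)
  also have "\<dots> \<le> B * real n * real (2 * card (RP m w (n - 1)))"
  proof -
    have "real (\<Sum>k=0..n. card (SK m w k n)) \<le> real (2 * card (RP m w (n - 1)))"
      using sum_SK[OF bin, of m n] by (simp only: of_nat_le_iff)
    then show ?thesis using B by (intro mult_left_mono) auto
  qed
  finally show ?thesis by (simp add: algebra_simps)
qed


lemma limsup_bound:
  fixes a :: "nat \<Rightarrow> nat" and c :: real
  assumes c: "c > 0" and ev: "\<exists>N. \<forall>n\<ge>N. real (a n) \<le> 2 * real n ^ 3 * c ^ n"
  shows "limsup (\<lambda>n. ereal (root n (real (a n)))) \<le> ereal c"
proof -
  obtain N where N: "\<forall>n\<ge>N. real (a n) \<le> 2 * real n ^ 3 * c ^ n" using ev by blast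
  define g where "g n = root n 2 * root n (real n) ^ 3 * c" for n
  have le: "eventually (\<lambda>n. ereal (root n (real (a n))) \<le> ereal (g n)) sequentially"
  proof (rule eventually_sequentiallyI[of "max N 1"])
    fix n assume n: "n \<ge> max N 1"
    then have n0: "0 < n" by simp
    have "root n (real (a n)) \<le> root n (2 * real n ^ 3 * c ^ n)"
      using N n n0 by (simp add: real_root_le_mono)
    also have "\<dots> = root n 2 * root n (real n) ^ 3 * root n (c ^ n)"
      by (simp add: real_root_mult real_root_power[OF n0])
    also have "root n (c ^ n) = c" using real_root_power_cancel[OF n0, of c] c by simp
    finally show "ereal (root n (real (a n))) \<le> ereal (g n)" unfolding g_def by simp
  qed
  have "g \<longlonglongrightarrow> 1 * 1 ^ 3 * c" unfolding g_def
    by (intro tendsto_intros LIMSEQ_root_const LIMSEQ_root) simp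
  then have "(\<lambda>n. ereal (g n)) \<longlonglongrightarrow> ereal c" by (simp add: tendsto_ereal)
  then have "limsup (\<lambda>n. ereal (g n)) = ereal c" by (rule lim_imp_Limsup[rotated]) simp
  moreover have "limsup (\<lambda>n. ereal (root n (real (a n)))) \<le> limsup (\<lambda>n. ereal (g n))"
    by (rule Limsup_mono[OF le])
  ultimately show ?thesis by simp
qed

lemma slope_range:
  assumes bin: "binary_word w" and sl: "has_slope w \<alpha>"
  shows "0 \<le> \<alpha>" "\<alpha> \<le> 1"
proof -
  have X: "(\<lambda>n. (\<Sum>i=1..n. real (w i)) / real n) \<longlonglongrightarrow> \<alpha>" using sl unfolding has_slope_def .
  have b: "0 \<le> (\<Sum>i=1..n. real (w i)) / real n \<and> (\<Sum>i=1..n. real (w i)) / real n \<le> 1" if "n \<ge> 1" for n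
  proof -
    have "(\<Sum>i=1..n. real (w i)) \<le> (\<Sum>i=1..n. 1)"
    proof (rule sum_mono)
      fix i assume "i \<in> {1..n}"
      then have "w i \<in> {0,1}" using bin unfolding binary_word_def by auto
      then show "real (w i) \<le> 1" by auto
    qed
    then have "(\<Sum>i=1..n. real (w i)) \<le> real n" by simp
    moreover have "0 \<le> (\<Sum>i=1..n. real (w i))" by (simp add: sum_nonneg)
    ultimately show ?thesis using that by (simp add: divide_le_eq)
  qed
  show "0 \<le> \<alpha>" by (rule LIMSEQ_le_const[OF X]) (use b in auto)
  show "\<alpha> \<le> 1"
  proof (rule LIMSEQ_le_const2[OF X])
    show "\<exists>N. \<forall>n\<ge>N. (\<Sum>i=1..n. real (w i)) / real n \<le> 1" using b by blast
  qed
qed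

lemma qbound:
  assumes m1: "m \<ge> 1" and UL: "unif_lower w \<alpha>" and x: "x > 0" and xa: "1 / x < real m + \<alpha>"
  shows "\<exists>N0. \<forall>n\<ge>N0. \<forall>pat\<in>RP m w (n - 1). real (qc pat) + 1 \<le> x * real n"
proof -
  define \<delta> where "\<delta> = (real m + \<alpha> - 1 / x) / 2"
  have d: "\<delta> > 0" unfolding \<delta>_def using xa by simp
  define D where "D = real m + \<alpha> - \<delta>"
  have D: "D > 1 / x"
  proof -
    have "D = (real m + \<alpha> + 1 / x) / 2" unfolding D_def \<delta>_def by (simp add: field_simps)
    then show ?thesis using xa by simp
  qed
  have Dp: "D > 0" using D x by (smt (verit) divide_pos_pos)
  define c where "c = 1 / D"
  have cx: "c < x" unfolding c_def using D x Dp by (simp add: field_simps)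
  have cp: "c > 0" unfolding c_def using Dp by simp
  obtain l0 where l0: "\<forall>l\<ge>l0. \<forall>i\<ge>1. (\<alpha> - \<delta>) * real l \<le> real (Wn w i l)"
    using UL d unfolding unif_lower_def by blast
  obtain N0 :: nat where N0: "real N0 \<ge> 2 / (x - c) + (real l0 + 2) / x" using real_arch_simple by blast
  have xc: "x - c > 0" using cx by simp
  show ?thesis
  proof (intro exI[of _ N0] allI impI ballI)
    fix n pat assume n: "n \<ge> N0" and pat: "pat \<in> RP m w (n - 1)"
    have nr: "real n \<ge> 2 / (x - c) + (real l0 + 2) / x" using n N0 by simp
    have t1: "2 / (x - c) \<ge> 0" "(real l0 + 2) / x \<ge> 0" using xc x by auto
    have A: "x * real n \<ge> real l0 + 2"
    proof -
      have "real n \<ge> (real l0 + 2) / x" using nr t1 by linarith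
      then show ?thesis using x by (simp add: field_simps)
    qed
    have B: "(x - c) * real n \<ge> 2"
    proof -
      have "real n \<ge> 2 / (x - c)" using nr t1 by linarith
      then show ?thesis using xc by (simp add: field_simps)
    qed
    define q where "q = qc pat"
    show "real (qc pat) + 1 \<le> x * real n"
    proof (cases "q = 0")
      case True then show ?thesis using A unfolding q_def by simp
    next
      case False
      then obtain i where i: "i \<ge> 1" "1 + (q - 1) * m + Wn w (Suc i) (q - 1) \<le> n - 1"
        using bcount[OF m1 pat] unfolding q_def by auto
      show ?thesis
      proof (cases "q - 1 < l0")
        case True
        then have "real q + 1 \<le> real l0 + 2" by simp
        then show ?thesis using A unfolding q_def by simp
      next
        case False
        then have W: "(\<alpha> - \<delta>) * real (q - 1) \<le> real (Wn w (Suc i) (q - 1))" using l0 by simp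
        have n1: "n \<ge> 1" using i(2) by simp
        have "real (1 + (q - 1) * m + Wn w (Suc i) (q - 1)) \<le> real (n - 1)" using i(2) by (simp only: of_nat_le_iff)
        then have "1 + real (q - 1) * real m + real (Wn w (Suc i) (q - 1)) \<le> real n - 1" using n1 by (simp add: of_nat_diff)
        then have "1 + real (q - 1) * real m + (\<alpha> - \<delta>) * real (q - 1) \<le> real n - 1" using W by linarith
        then have "real (q - 1) * D \<le> real n - 2" unfolding D_def by (simp add: algebra_simps)
        then have "real (q - 1) \<le> (real n - 2) * c" unfolding c_def using Dp by (simp add: field_simps)
        also have "\<dots> \<le> real n * c" using cp by (simp add: algebra_simps)
        finally have "real q - 1 \<le> real n * c" using \<open>q \<noteq> 0\<close> by (simp add: of_nat_diff)
        then have "real q + 1 \<le> real n * c + 2" by simp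
        also have "\<dots> \<le> x * real n" using B by (simp add: algebra_simps)
        finally show ?thesis unfolding q_def .
      qed
    qed
  qed
qed


lemma Phi_pos: "x > 0 \<Longrightarrow> x < 1 \<Longrightarrow> Phi x > 0"
  unfolding Phi_def by simp

lemma Phi_half: "Phi (1/2) = 2"
proof -
  have "Phi (1/2) = (1/2) powr (-1/2) * (1/2) powr (-1/2)" unfolding Phi_def by simp
  also have "\<dots> = (1/2) powr (-1)" by (simp add: powr_add[symmetric])
  also have "\<dots> = 2" by (simp add: powr_minus)
  finally show ?thesis .
qed

lemma Phi_cont: "0 < x \<Longrightarrow> x < 1 \<Longrightarrow> isCont Phi x"
  unfolding Phi_def by (auto intro!: continuous_intros)


theorem lemma3:
  fixes F :: "'a::field_char_0 itself"
    and m :: nat and w :: "nat \<Rightarrow> nat" and \<alpha> \<beta> :: real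
  assumes "m \<ge> 2"
    and "binary_word w"
    and "periodic_word w \<or> sturmian_word w"
    and "has_slope w \<alpha>"
    and "\<beta> = 1 / (real m + \<alpha>)"
  shows "(\<forall>\<epsilon>::real. 0 < \<epsilon> \<and> \<epsilon> \<le> 1/2 - \<beta> \<longrightarrow>
           (\<exists>n0. \<forall>n\<ge>n0. real (cgr F m w n) \<le> 2 * real n ^ 3 * Phi (\<beta> + \<epsilon>) ^ n))
       \<and> limsup (\<lambda>n. ereal (root n (real (cgr F m w n)))) \<le> ereal (Phi \<beta>)"
proof -
  note bin = assms(2)
  have m1: "m \<ge> 1" using assms(1) by simp
  have a01: "0 \<le> \<alpha>" "\<alpha> \<le> 1" using slope_range[OF bin assms(4)] by auto
  have mp: "real m + \<alpha> \<ge> 2" using assms(1) a01 by simp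
  have bpos: "\<beta> > 0" using assms(5) mp by simp
  have bhalf: "\<beta> \<le> 1/2"
  proof -
    have "1 / (real m + \<alpha>) \<le> 1 / 2" using mp by (intro divide_left_mono) auto
    then show ?thesis using assms(5) by simp
  qed
  have UL: "unif_lower w \<alpha>"
    using assms(3) periodic_lower[OF bin _ assms(4)] balanced_lower[OF bin sturmian_balanced[OF bin] assms(4)] by blast
  obtain C where C: "\<forall>n. card (factors w n) \<le> n + 1 + C"
  proof (cases "periodic_word w")
    case True
    then obtain p where p: "p \<ge> 1" "\<forall>i\<ge>1. w (i + p) = w i" unfolding periodic_word_def by blast
    then have "eventually_periodic w" unfolding eventually_periodic_def by blast
    then obtain C0 where C0: "\<forall>k. card (factors w k) \<le> C0" using ep_card_le by blast
    have "\<forall>n. card (factors w n) \<le> n + 1 + C0"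
    proof
      fix n show "card (factors w n) \<le> n + 1 + C0" using C0[rule_format, of n] by simp
    qed
    then show ?thesis by (rule that)
  next
    case False
    then have "sturmian_word w" using assms(3) by blast
    then have "\<forall>n. card (factors w n) \<le> n + 1 + 0" using stu_card by simp
    then show ?thesis by (rule that)
  qed
  define N2 where "N2 = (m + 1) * (C + 2) + 1"
  have RPb: "real (card (RP m w (n - 1))) \<le> real n ^ 2" if n: "n \<ge> N2" for n
  proof -
    have n1: "n \<ge> 1" using n unfolding N2_def by simp
    have "card (RP m w (n - 1)) \<le> (m + 1) * card (factors w (n - 1 + 1))" by (rule card_RP[OF bin m1])
    also have "n - 1 + 1 = n" using n1 by simp
    also have "(m + 1) * card (factors w n) \<le> (m + 1) * (n + 1 + C)" using C by (intro mult_le_mono2) blast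
    also have "\<dots> \<le> (m + 1) * (n * (C + 2))"
    proof -
      have h: "1 * C \<le> n * C" using n1 by (rule mult_le_mono1)
      have e: "n * (C + 2) = n * C + 2 * n" by (simp add: algebra_simps)
      have "n + 1 + C \<le> n * (C + 2)" unfolding e using h n1 by linarith
      then show ?thesis by (rule mult_le_mono2)
    qed
    also have "\<dots> = n * ((m + 1) * (C + 2))" by (simp only: mult.assoc mult.left_commute)
    also have "\<dots> \<le> n * n"
    proof -
      have "(m + 1) * (C + 2) \<le> n" using n unfolding N2_def by simp
      then show ?thesis by (rule mult_le_mono2)
    qed
    finally have "card (RP m w (n - 1)) \<le> n * n" .
    then have "real (card (RP m w (n - 1))) \<le> real (n * n)" by (simp only: of_nat_le_iff)
    then show ?thesis by (simp add: power2_eq_square)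
  qed
  have fin: "real (cgr F m w n) \<le> 2 * real n ^ 3 * B"
    if n: "n \<ge> N2" and B: "B \<ge> 0" and hyp: "\<And>k. k \<le> n \<Longrightarrow> SK m w k n \<noteq> {} \<Longrightarrow> real (n choose k) \<le> B" for n B
  proof -
    have "real (cgr F m w n) \<le> 2 * B * real n * real (card (RP m w (n - 1)))"
      by (rule cgr_bound[OF m1 bin B hyp])
    also have "\<dots> \<le> 2 * B * real n * real n ^ 2"
      using RPb[OF n] B by (intro mult_left_mono) auto
    finally show ?thesis by (simp add: power_def algebra_simps)
  qed
  have main: "\<exists>n0. \<forall>n\<ge>n0. real (cgr F m w n) \<le> 2 * real n ^ 3 * Phi x ^ n"
    if x: "0 < x" "x \<le> 1/2" "1 / x < real m + \<alpha>" for x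
  proof -
    obtain N0 where N0: "\<forall>n\<ge>N0. \<forall>pat\<in>RP m w (n - 1). real (qc pat) + 1 \<le> x * real n"
      using qbound[OF m1 UL x(1) x(3)] by blast
    show ?thesis
    proof (intro exI[of _ "max N0 N2"] allI impI)
      fix n assume n: "max N0 N2 \<le> n"
      show "real (cgr F m w n) \<le> 2 * real n ^ 3 * Phi x ^ n"
      proof (rule fin)
        show "n \<ge> N2" using n by simp
        show "Phi x ^ n \<ge> 0" using Phi_pos[of x] x by simp
        fix k assume k: "k \<le> n" "SK m w k n \<noteq> {}"
        then obtain pat where pat: "pat \<in> RP m w (n - 1)" "qc pat = n - k \<or> qc pat + 1 = n - k"
          unfolding SK_def by auto
        have "real (qc pat) + 1 \<le> x * real n" using N0 n pat(1) by simp
        then have "real (n - k) \<le> x * real n" using pat(2) by auto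
        then have "real (n choose (n - k)) \<le> Phi x ^ n" by (rule binom_Phi[OF x(1) x(2)])
        then show "real (n choose k) \<le> Phi x ^ n" using binomial_symmetric[OF k(1)] by simp
      qed
    qed
  qed
  have conj1: "\<forall>\<epsilon>::real. 0 < \<epsilon> \<and> \<epsilon> \<le> 1/2 - \<beta> \<longrightarrow>
           (\<exists>n0. \<forall>n\<ge>n0. real (cgr F m w n) \<le> 2 * real n ^ 3 * Phi (\<beta> + \<epsilon>) ^ n)"
  proof (intro allI impI)
    fix \<epsilon> :: real assume e: "0 < \<epsilon> \<and> \<epsilon> \<le> 1/2 - \<beta>"
    have "1 / (\<beta> + \<epsilon>) < 1 / \<beta>" using e bpos by (simp add: frac_less2)
    also have "1 / \<beta> = real m + \<alpha>" using assms(5) mp by simp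
    finally show "\<exists>n0. \<forall>n\<ge>n0. real (cgr F m w n) \<le> 2 * real n ^ 3 * Phi (\<beta> + \<epsilon>) ^ n"
      using main[of "\<beta> + \<epsilon>"] e bpos by simp
  qed
  have conj2: "limsup (\<lambda>n. ereal (root n (real (cgr F m w n)))) \<le> ereal (Phi \<beta>)"
  proof (cases "\<beta> < 1/2")
    case True
    define d where "d = 1/2 - \<beta>"
    have d: "d > 0" unfolding d_def using True by simp
    define e where "e k = d / real (k + 2)" for k :: nat
    have e: "0 < e k" "e k \<le> d" for k unfolding e_def using d by (auto simp: field_simps)
    have lk: "limsup (\<lambda>n. ereal (root n (real (cgr F m w n)))) \<le> ereal (Phi (\<beta> + e k))" for k
    proof (rule limsup_bound)
      show "Phi (\<beta> + e k) > 0" using e[of k] bpos d_def by (intro Phi_pos) auto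
      show "\<exists>N. \<forall>n\<ge>N. real (cgr F m w n) \<le> 2 * real n ^ 3 * Phi (\<beta> + e k) ^ n"
        using conj1 e[of k] unfolding d_def by blast
    qed
    have "e \<longlonglongrightarrow> 0" unfolding e_def
      using LIMSEQ_ignore_initial_segment[OF lim_const_over_n[of d], of 2] by simp
    then have "(\<lambda>k. \<beta> + e k) \<longlonglongrightarrow> \<beta> + 0" by (intro tendsto_add tendsto_const)
    then have "(\<lambda>k. Phi (\<beta> + e k)) \<longlonglongrightarrow> Phi \<beta>"
      using isCont_tendsto_compose[OF Phi_cont[of \<beta>]] bpos bhalf by simp
    then have "(\<lambda>k. ereal (Phi (\<beta> + e k))) \<longlonglongrightarrow> ereal (Phi \<beta>)" by (simp add: tendsto_ereal)
    then show ?thesis by (rule LIMSEQ_le_const) (use lk in blast)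
  next
    case False
    then have b2: "\<beta> = 1/2" using bhalf by simp
    have "limsup (\<lambda>n. ereal (root n (real (cgr F m w n)))) \<le> ereal 2"
    proof (rule limsup_bound)
      show "\<exists>N. \<forall>n\<ge>N. real (cgr F m w n) \<le> 2 * real n ^ 3 * 2 ^ n"
      proof (intro exI[of _ N2] allI impI)
        fix n assume "n \<ge> N2"
        then show "real (cgr F m w n) \<le> 2 * real n ^ 3 * 2 ^ n"
        proof (rule fin)
          fix k show "real (n choose k) \<le> 2 ^ n"
            using binomial_le_pow2[of n k] by (metis of_nat_le_iff of_nat_numeral of_nat_power)
        qed simp
      qed
    qed simp
    moreover have "Phi \<beta> = 2" unfolding b2 by (rule Phi_half)
    ultimately show ?thesis by simp
  qed
  show ?thesis using conj1 conj2 by blast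
qed


end
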